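(* Consider the two-route traffic model described in the context, under assumptions (A1)–(A6). The system has a unique equilibrium $\overline{x}\in\Omega$, and $\overline{x}$ is globally asymptotically stable on $\Omega$ (it is Lyapunov stable and every solution starting in $\Omega$ converges to $\overline{x}$).
   Context: Two routes $i=1,2$ connect an origin to a destination. For each route there are positive parameters $B_i$, $C_i$, $F_i$ with $C_i<B_i$; the demand is a constant $\phi>0$. Set $v_i=F_i/C_i$ and $E_i=v_iB_i$. The state $x=(x_1,x_2)\in\Omega:=[0,B_1]\times[0,B_2]$ evolves by $\dot x_i=\min\{\phi R_i(x),S_i(x_i)\}-D_i(x_i)$, $i=1,2$, with $S_i(x_i)=F_i$ if $x_i<C_i$, $S_i(x_i)=\frac{F_i}{B_i-C_i}(B_i-x_i)$ otherwise; $D_i(x_i)=v_ix_i$ if $x_i<C_i$, $D_i(x_i)=F_i$ otherwise. Routing ratios: $R_i(x)=(1-\alpha)r_i^0+\alpha\, r_i(\tau(x))$, with $\alpha\in(0,1]$, $r_1^0,r_2^0\ge0$, $r_1^0+r_2^0=1$, $\tau(x)=(\tau_1(x_1),\tau_2(x_2))$, each $\tau_i$ $C^1$ and strictly increasing, $0\le r_i(\tau(x))\le1$, $r_1(\tau(x))+r_2(\tau(x))=1$ on $\Omega$, $x\mapsto r_i(\tau(x))$ globally Lipschitz and $C^1$ on $\Omega$. Assumptions: (A1) $\phi<F_1+F_2$; (A2)–(A3) as just listed; (A4) $\partial R_i/\partial\tau_j>0$ for $i\ne j$; (A5) $F_i>(1-\alpha)\phi r_i^0$; (A6) $\phi<E_i$,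 $i=1,2$. *)

theory Defs
  imports "HOL-Analysis.Analysis"
begin

definition supply_fun :: "real \<Rightarrow> real \<Rightarrow> real \<Rightarrow> real \<Rightarrow> real" where
  "supply_fun F B C x = (if x < C then F else F / (B - C) * (B - x))"

text \<open>Demand (outflow) function D_i, with v = F / C.\<close>
definition demand_fun :: "real \<Rightarrow> real \<Rightarrow> real \<Rightarrow> real" where
  "demand_fun F C x = (if x < C then (F / C) * x else F)"

definition Omega :: "real \<Rightarrow> real \<Rightarrow> (real \<times> real) set" where
  "Omega B1 B2 = {0..B1} \<times> {0..B2}"

definition routing :: "real \<Rightarrow> real \<Rightarrow> (real \<times> real \<Rightarrow> real)
    \<Rightarrow> (real \<Rightarrow> real) \<Rightarrow> (real \<Rightarrow> real) \<Rightarrow> real \<times> real \<Rightarrow> real" where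
  "routing \<alpha> r0 r \<tau>1 \<tau>2 x = (1 - \<alpha>) * r0 + \<alpha> * r (\<tau>1 (fst x), \<tau>2 (snd x))"

definition two_route_field ::
  "real \<Rightarrow> real \<Rightarrow> real \<Rightarrow> real \<Rightarrow> real \<Rightarrow> real \<Rightarrow> real
   \<Rightarrow> (real \<times> real \<Rightarrow> real) \<Rightarrow> (real \<times> real \<Rightarrow> real)
   \<Rightarrow> real \<times> real \<Rightarrow> real \<times> real" where
  "two_route_field \<phi> B1 C1 F1 B2 C2 F2 R1 R2 x =
     (min (\<phi> * R1 x) (supply_fun F1 B1 C1 (fst x)) - demand_fun F1 C1 (fst x),
      min (\<phi> * R2 x) (supply_fun F2 B2 C2 (snd x)) - demand_fun F2 C2 (snd x))"

definition is_solution :: "('a::real_normed_vector \<Rightarrow> 'a) \<Rightarrow> 'a set \<Rightarrow> (real \<Rightarrow> 'a) \<Rightarrow> bool" where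
  "is_solution f S x \<longleftrightarrow>
     (\<forall>t\<ge>0. x t \<in> S \<and> (x has_vector_derivative f (x t)) (at t within {0..}))"

end

theory Submission
  imports Defs
begin

lemma at_within_nonneg: "(t::real) > 0 \<Longrightarrow> at t within {0..} = at t"
  by (rule at_within_interior) simp

lemma comp_deriv:
  fixes x :: "real \<Rightarrow> real \<times> real"
  assumes "(x has_vector_derivative v) (at t within S)"
  shows "((\<lambda>t. fst (x t)) has_real_derivative fst v) (at t within S)"
    and "((\<lambda>t. snd (x t)) has_real_derivative snd v) (at t within S)"
proof -
  have d: "(x has_derivative (\<lambda>h. h *\<^sub>R v)) (at t within S)"
    using assms by (simp add: has_vector_derivative_def)
  have "((\<lambda>t. fst (x t)) has_derivative (\<lambda>h. fst (h *\<^sub>R v))) (at t within S)"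
    by (rule has_derivative_fst[OF d])
  then show "((\<lambda>t. fst (x t)) has_real_derivative fst v) (at t within S)"
    by (simp add: has_field_derivative_def mult.commute[of _ "fst v"] fun_eq_iff)
  have "((\<lambda>t. snd (x t)) has_derivative (\<lambda>h. snd (h *\<^sub>R v))) (at t within S)"
    by (rule has_derivative_snd[OF d])
  then show "((\<lambda>t. snd (x t)) has_real_derivative snd v) (at t within S)"
    by (simp add: has_field_derivative_def mult.commute[of _ "snd v"] fun_eq_iff)
qed

lemma eventually_below:
  fixes u u' :: "real \<Rightarrow> real"
  assumes deriv: "\<forall>t\<ge>0. (u has_real_derivative u' t) (at t within {0..})"
    and T: "\<forall>t\<ge>T. u t \<ge> l \<longrightarrow> u' t \<le> -c" and c: "c > 0"
  shows "\<exists>T'. \<forall>t\<ge>T'. u t < l"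
proof -
  define T1 where "T1 = max T 1"
  have d: "(u has_real_derivative u' t) (at t)" if "t \<ge> T1" for t
  proof -
    have "t > 0" using that by (simp add: T1_def)
    moreover have "(u has_real_derivative u' t) (at t within {0..})" using deriv \<open>t > 0\<close> by auto
    ultimately show ?thesis using at_within_nonneg[of t] by simp
  qed
  have step1: "\<exists>t1\<ge>T1. u t1 < l"
  proof (rule ccontr)
    assume "\<not> ?thesis"
    then have ge: "\<forall>t\<ge>T1. u t \<ge> l" by auto
    define s where "s = T1 + (\<bar>u T1 - l\<bar> + 1) / c"
    have sT: "T1 \<le> s" using c by (simp add: s_def)
    have "(\<lambda>t. u t + c * t) s \<le> (\<lambda>t. u t + c * t) T1"
    proof (rule DERIV_nonpos_imp_nonincreasing[OF sT])
      fix x assume x: "T1 \<le> x" "x \<le> s"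
      have "((\<lambda>t. u t + c * t) has_real_derivative u' x + c) (at x)"
        by (auto intro!: derivative_eq_intros d x)
      moreover have "u' x \<le> -c" using T ge x by (auto simp: T1_def)
      ultimately show "\<exists>y. ((\<lambda>t. u t + c * t) has_real_derivative y) (at x) \<and> y \<le> 0"
        by (intro exI[of _ "u' x + c"]) auto
    qed
    then have "u s \<le> u T1 - c * (s - T1)" by (simp add: algebra_simps)
    also have "c * (s - T1) = \<bar>u T1 - l\<bar> + 1" using c by (simp add: s_def)
    finally have "u s < l" by linarith
    with ge sT show False by auto
  qed
  then obtain t1 where t1: "t1 \<ge> T1" "u t1 < l" by auto
  have "\<forall>t\<ge>t1. u t < l"
  proof (rule ccontr)
    assume "\<not> ?thesis"
    then obtain s where s: "s \<ge> t1" "u s \<ge> l" by auto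
    define S where "S = {t1..s} \<inter> u -` {l..}"
    have cont: "continuous_on {t1..s} u"
      by (rule continuous_at_imp_continuous_on) (use d t1 DERIV_isCont in \<open>meson atLeastAtMost_iff order_trans\<close>)
    have "closed S" unfolding S_def by (rule continuous_closed_preimage[OF cont]) auto
    moreover have "S \<noteq> {}" using s by (auto simp: S_def)
    moreover have "bdd_below S" by (auto simp: S_def bdd_below_def)
    ultimately have mS: "Inf S \<in> S" by (rule closed_contains_Inf[rotated 2])
    define m where "m = Inf S"
    have m: "t1 \<le> m" "m \<le> s" "u m \<ge> l" using mS by (auto simp: S_def m_def)
    have "m \<noteq> t1" using m t1 by auto
    with m have mt: "m > t1" by auto
    have "u' m \<le> -c" using T m t1 by (auto simp: T1_def)
    then have "u' m < 0" using c by auto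
    from DERIV_neg_dec_left[OF d[of m] this] m t1
    obtain dd where dd: "dd > 0" "\<forall>h>0. h < dd \<longrightarrow> u m < u (m - h)" by auto
    define h where "h = min (dd/2) ((m - t1)/2)"
    have h1: "h \<le> (m - t1)/2" "h \<le> dd/2" unfolding h_def by (rule min.cobounded2, rule min.cobounded1)
    have "h > 0" using dd mt by (simp add: h_def)
    moreover have "m - h \<ge> t1" using h1(1) mt by argo
    ultimately have h: "h > 0" "h < dd" "m - h \<ge> t1" using h1 dd by linarith+
    then have "u (m - h) > l" using dd m by force
    then have "m - h \<in> S" using h m by (auto simp: S_def)
    then have "m \<le> m - h" unfolding m_def by (rule cInf_lower) (auto simp: S_def bdd_below_def)
    then show False using h by auto
  qed
  then show ?thesis by auto
qed

lemma eventually_above: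
  fixes u u' :: "real \<Rightarrow> real"
  assumes deriv: "\<forall>t\<ge>0. (u has_real_derivative u' t) (at t within {0..})"
    and T: "\<forall>t\<ge>T. u t \<le> l \<longrightarrow> u' t \<ge> c" and c: "c > 0"
  shows "\<exists>T'. \<forall>t\<ge>T'. u t > l"
proof -
  have "\<exists>T'. \<forall>t\<ge>T'. - u t < - l"
    by (rule eventually_below[of "\<lambda>t. - u t" "\<lambda>t. - u' t" T "-l" c])
       (use deriv T c in \<open>auto intro: DERIV_minus\<close>)
  then show ?thesis by auto
qed

lemma first_exit:
  fixes x :: "real \<Rightarrow> 'a::topological_space"
  assumes cont: "continuous_on {0..} x" and K: "closed K" and x0: "x 0 \<in> K"
    and s1: "s1 \<ge> 0" "x s1 \<notin> K"
  shows "\<exists>s\<ge>0. x s \<in> K \<and> (\<forall>d>0. \<exists>t. s < t \<and> t < s + d \<and> x t \<notin> K)"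
proof -
  define S where "S = {t. 0 \<le> t \<and> t \<le> s1 \<and> x t \<notin> K}"
  have ne: "S \<noteq> {}" using s1 by (auto simp: S_def)
  have bb: "bdd_below S" by (auto simp: S_def bdd_below_def)
  define m where "m = Inf S"
  have m0: "m \<ge> 0" unfolding m_def using ne by (rule cInf_greatest) (auto simp: S_def)
  have before: "x t \<in> K" if "0 \<le> t" "t < m" for t
  proof (rule ccontr)
    assume "x t \<notin> K"
    have "t \<le> s1"
    proof -
      have "m \<le> s1" unfolding m_def by (rule cInf_lower) (use s1 bb in \<open>auto simp: S_def\<close>)
      then show ?thesis using that by auto
    qed
    then have "t \<in> S" using that \<open>x t \<notin> K\<close> by (auto simp: S_def)
    then have "m \<le> t" unfolding m_def using bb by (rule cInf_lower)
    then show False using that by auto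
  qed
  have xm: "x m \<in> K"
  proof (cases "m = 0")
    case True then show ?thesis using x0 by simp
  next
    case False
    then have mpos: "m > 0" using m0 by auto
    have cm: "continuous_on {0..m} x" using cont by (rule continuous_on_subset) auto
    have cl: "closed ({0..m} \<inter> x -` K)" by (rule continuous_closed_preimage[OF cm]) (use K in auto)
    have "{0..<m} \<subseteq> {0..m} \<inter> x -` K" using before by auto
    then have "closure {0..<m} \<subseteq> {0..m} \<inter> x -` K" using cl by (rule closure_minimal)
    then have "{0..m} \<subseteq> x -` K" using mpos by simp
    then show ?thesis using mpos by (meson atLeastAtMost_iff order_refl less_imp_le subsetD vimageE)
  qed
  have "\<forall>d>0. \<exists>t. m < t \<and> t < m + d \<and> x t \<notin> K"
  proof (intro allI impI)
    fix d :: real assume d: "d > 0"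
    have "Inf S < m + d" using d by (simp add: m_def)
    then obtain t where t: "t \<in> S" "t < m + d" using cInf_less_iff[OF ne bb] by auto
    have "m \<le> t" unfolding m_def using t(1) bb by (rule cInf_lower)
    moreover have "t \<noteq> m" using t xm by (auto simp: S_def)
    ultimately have "m < t" by auto
    then show "\<exists>t. m < t \<and> t < m + d \<and> x t \<notin> K" using t by (auto simp: S_def)
  qed
  then show ?thesis using m0 xm by auto
qed

lemma stay_below:
  fixes u :: "real \<Rightarrow> real"
  assumes d: "(u has_real_derivative D) (at s within {0..})" and s: "s \<ge> 0"
    and le: "u s \<le> b" and eq: "u s = b \<longrightarrow> D < 0"
  shows "\<exists>d>0. \<forall>h. 0 < h \<and> h < d \<longrightarrow> u (s + h) \<le> b"
proof (cases "u s = b")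
  case True
  then have "D < 0" using eq by auto
  from has_real_derivative_neg_dec_right[OF d this] obtain dd where
    "dd > 0" "\<forall>h>0. s + h \<in> {0..} \<longrightarrow> h < dd \<longrightarrow> u (s + h) < u s" by auto
  then show ?thesis using s True by (intro exI[of _ dd]) force
next
  case False
  then have lt: "u s < b" using le by auto
  have "continuous (at s within {0..}) u" by (rule DERIV_continuous[OF d])
  then have "(u \<longlongrightarrow> u s) (at s within {0..})" by (simp add: continuous_within)
  then have "\<forall>\<^sub>F t in at s within {0..}. u t < b" using lt by (rule order_tendstoD)
  then obtain dd where dd: "dd > 0" "\<forall>t\<in>{0..}. t \<noteq> s \<and> dist t s < dd \<longrightarrow> u t < b"
    unfolding eventually_at by auto
  show ?thesis
  proof (intro exI[of _ dd] conjI allI impI)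
    fix h :: real assume h: "0 < h \<and> h < dd"
    then show "u (s + h) \<le> b" using dd(2)[rule_format, of "s + h"] s by (auto simp: dist_real_def)
  qed (use dd in auto)
qed

lemma stay_above:
  fixes u :: "real \<Rightarrow> real"
  assumes d: "(u has_real_derivative D) (at s within {0..})" and s: "s \<ge> 0"
    and le: "u s \<ge> b" and eq: "u s = b \<longrightarrow> D > 0"
  shows "\<exists>d>0. \<forall>h. 0 < h \<and> h < d \<longrightarrow> u (s + h) \<ge> b"
proof -
  have "\<exists>d>0. \<forall>h. 0 < h \<and> h < d \<longrightarrow> - u (s + h) \<le> - b"
    by (rule stay_below[of "\<lambda>t. - u t" "- D" s "-b"]) (use d s le eq in \<open>auto intro: DERIV_minus\<close>)
  then show ?thesis by auto
qed

definition UBs :: "(real \<Rightarrow> real) \<Rightarrow> real set" where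
  "UBs u = {b. \<forall>\<^sub>F t in at_top. u t \<le> b}"
definition LBs :: "(real \<Rightarrow> real) \<Rightarrow> real set" where
  "LBs u = {b. \<forall>\<^sub>F t in at_top. b \<le> u t}"

lemma UBs_props:
  fixes u :: "real \<Rightarrow> real"
  assumes bnd: "\<forall>t\<ge>0. lo \<le> u t \<and> u t \<le> hi"
  shows "lo \<le> Inf (UBs u)" "Inf (UBs u) \<le> hi"
    "\<And>e. e > 0 \<Longrightarrow> \<forall>\<^sub>F t in at_top. u t \<le> Inf (UBs u) + e"
    "\<And>b. b \<in> UBs u \<Longrightarrow> Inf (UBs u) \<le> b"
proof -
  have hi: "hi \<in> UBs u" unfolding UBs_def using bnd
    by (auto intro!: eventually_mono[OF eventually_ge_at_top[of 0]])
  have lo: "lo \<le> b" if "b \<in> UBs u" for b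
  proof -
    have "\<forall>\<^sub>F t in at_top. u t \<le> b \<and> t \<ge> 0" using that eventually_ge_at_top[of 0]
      unfolding UBs_def by (auto intro: eventually_conj)
    then obtain t where "u t \<le> b" "t \<ge> 0" using eventually_happens[of _ at_top] by force
    then show ?thesis using bnd by force
  qed
  have ne: "UBs u \<noteq> {}" using hi by auto
  have bb: "bdd_below (UBs u)" using lo by (auto simp: bdd_below_def)
  show "lo \<le> Inf (UBs u)" using ne lo by (rule cInf_greatest)
  show "Inf (UBs u) \<le> hi" using hi bb by (rule cInf_lower)
  show "\<And>b. b \<in> UBs u \<Longrightarrow> Inf (UBs u) \<le> b" using bb by (simp add: cInf_lower)
  fix e :: real assume e: "e > 0"
  then have "Inf (UBs u) < Inf (UBs u) + e" by simp
  then obtain b where b: "b \<in> UBs u" "b < Inf (UBs u) + e" using cInf_less_iff[OF ne bb, of "Inf (UBs u) + e"] e by auto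
  then show "\<forall>\<^sub>F t in at_top. u t \<le> Inf (UBs u) + e" unfolding UBs_def
    by (auto elim: eventually_mono)
qed

lemma LBs_props:
  fixes u :: "real \<Rightarrow> real"
  assumes bnd: "\<forall>t\<ge>0. lo \<le> u t \<and> u t \<le> hi"
  shows "lo \<le> Sup (LBs u)" "Sup (LBs u) \<le> hi"
    "\<And>e. e > 0 \<Longrightarrow> \<forall>\<^sub>F t in at_top. Sup (LBs u) - e \<le> u t"
    "\<And>b. b \<in> LBs u \<Longrightarrow> b \<le> Sup (LBs u)"
proof -
  have lo: "lo \<in> LBs u" unfolding LBs_def using bnd
    by (auto intro!: eventually_mono[OF eventually_ge_at_top[of 0]])
  have hi: "b \<le> hi" if "b \<in> LBs u" for b
  proof -
    have "\<forall>\<^sub>F t in at_top. b \<le> u t \<and> t \<ge> 0" using that eventually_ge_at_top[of 0]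
      unfolding LBs_def by (auto intro: eventually_conj)
    then obtain t where "b \<le> u t" "t \<ge> 0" using eventually_happens[of _ at_top] by force
    then show ?thesis using bnd by force
  qed
  have ne: "LBs u \<noteq> {}" using lo by auto
  have bb: "bdd_above (LBs u)" using hi by (auto simp: bdd_above_def)
  show "Sup (LBs u) \<le> hi" using ne hi by (rule cSup_least)
  show "lo \<le> Sup (LBs u)" using lo bb by (rule cSup_upper)
  show "\<And>b. b \<in> LBs u \<Longrightarrow> b \<le> Sup (LBs u)" using bb by (simp add: cSup_upper)
  fix e :: real assume e: "e > 0"
  then have "Sup (LBs u) - e < Sup (LBs u)" by simp
  then obtain b where b: "b \<in> LBs u" "Sup (LBs u) - e < b" using less_cSup_iff[OF ne bb] by auto
  then show "\<forall>\<^sub>F t in at_top. Sup (LBs u) - e \<le> u t" unfolding LBs_def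
    by (auto elim: eventually_mono)
qed

lemma limsup_contra:
  fixes u u' :: "real \<Rightarrow> real"
  assumes deriv: "\<forall>t\<ge>0. (u has_real_derivative u' t) (at t within {0..})"
    and bnd: "\<forall>t\<ge>0. lo \<le> u t \<and> u t \<le> hi"
    and \<delta>: "\<delta> > 0" and c: "c > 0"
    and ev: "\<forall>\<^sub>F t in at_top. u t \<ge> Inf (UBs u) - \<delta> \<longrightarrow> u' t \<le> -c"
  shows False
proof -
  from ev obtain T where T: "\<forall>t\<ge>T. u t \<ge> Inf (UBs u) - \<delta> \<longrightarrow> u' t \<le> -c"
    unfolding eventually_at_top_linorder by auto
  from eventually_below[OF deriv T c] obtain T' where "\<forall>t\<ge>T'. u t < Inf (UBs u) - \<delta>" by auto
  then have "Inf (UBs u) - \<delta> \<in> UBs u" unfolding UBs_def eventually_at_top_linorder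
    by (auto intro: less_imp_le)
  then have "Inf (UBs u) \<le> Inf (UBs u) - \<delta>" by (rule UBs_props(4)[OF bnd])
  then show False using \<delta> by auto
qed

lemma liminf_contra:
  fixes u u' :: "real \<Rightarrow> real"
  assumes deriv: "\<forall>t\<ge>0. (u has_real_derivative u' t) (at t within {0..})"
    and bnd: "\<forall>t\<ge>0. lo \<le> u t \<and> u t \<le> hi"
    and \<delta>: "\<delta> > 0" and c: "c > 0"
    and ev: "\<forall>\<^sub>F t in at_top. u t \<le> Sup (LBs u) + \<delta> \<longrightarrow> u' t \<ge> c"
  shows False
proof -
  from ev obtain T where T: "\<forall>t\<ge>T. u t \<le> Sup (LBs u) + \<delta> \<longrightarrow> u' t \<ge> c"
    unfolding eventually_at_top_linorder by auto
  from eventually_above[OF deriv T c] obtain T' where "\<forall>t\<ge>T'. u t > Sup (LBs u) + \<delta>" by auto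
  then have "Sup (LBs u) + \<delta> \<in> LBs u" unfolding LBs_def eventually_at_top_linorder
    by (auto intro: less_imp_le)
  then have "Sup (LBs u) + \<delta> \<le> Sup (LBs u)" by (rule LBs_props(4)[OF bnd])
  then show False using \<delta> by auto
qed

locale gas =
  fixes f :: "real \<times> real \<Rightarrow> real \<times> real" and B1 B2 :: real and xb :: "real \<times> real"
    and Om :: "(real \<times> real) set"
  assumes Om_def: "Om = {0..B1} \<times> {0..B2}"
    and B: "B1 > 0" "B2 > 0"
    and xbO: "xb \<in> Om" and xbB: "fst xb < B1" "snd xb < B2"
    and fxb: "f xb = 0"
    and cont: "continuous_on Om f"
    and mono1: "\<And>p q. p \<in> Om \<Longrightarrow> q \<in> Om \<Longrightarrow> fst p = fst q \<Longrightarrow> snd p \<le> snd q \<Longrightarrow> fst (f p) \<le> fst (f q)"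
    and mono2: "\<And>p q. p \<in> Om \<Longrightarrow> q \<in> Om \<Longrightarrow> snd p = snd q \<Longrightarrow> fst p \<le> fst q \<Longrightarrow> snd (f p) \<le> snd (f q)"
    and up: "\<And>p. p \<in> Om \<Longrightarrow> fst (f p) \<ge> 0 \<Longrightarrow> snd (f p) \<ge> 0 \<Longrightarrow> fst p \<le> fst xb \<and> snd p \<le> snd xb"
    and low: "\<And>p. p \<in> Om \<Longrightarrow> fst (f p) \<le> 0 \<Longrightarrow> snd (f p) \<le> 0 \<Longrightarrow> fst xb \<le> fst p \<and> snd xb \<le> snd p"
    and strict2: "\<And>p q. p \<in> Om \<Longrightarrow> q \<in> Om \<Longrightarrow> fst p = fst q \<Longrightarrow> snd p < snd q \<Longrightarrow> snd (f q) < snd (f p) \<or> snd (f q) < 0"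
begin

lemma inOm: "p \<in> Om \<longleftrightarrow> 0 \<le> fst p \<and> fst p \<le> B1 \<and> 0 \<le> snd p \<and> snd p \<le> B2"
  by (cases p) (auto simp: Om_def)

lemma cont_at:
  assumes "p \<in> Om" "e > 0"
  shows "\<exists>d>0. \<forall>y\<in>Om. dist y p < d \<longrightarrow> \<bar>fst (f y) - fst (f p)\<bar> < e \<and> \<bar>snd (f y) - snd (f p)\<bar> < e"
proof -
  from cont assms obtain d where d: "d > 0" "\<forall>y\<in>Om. dist y p < d \<longrightarrow> dist (f y) (f p) < e"
    unfolding continuous_on_iff by blast
  show ?thesis
  proof (intro exI[of _ d] conjI ballI impI)
    fix y assume y: "y \<in> Om" "dist y p < d"
    then have "dist (f y) (f p) < e" using d by auto
    moreover have "dist (fst (f y)) (fst (f p)) \<le> dist (f y) (f p)" by (rule dist_fst_le)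
    moreover have "dist (snd (f y)) (snd (f p)) \<le> dist (f y) (f p)" by (rule dist_snd_le)
    ultimately show "\<bar>fst (f y) - fst (f p)\<bar> < e" "\<bar>snd (f y) - snd (f p)\<bar> < e"
      by (auto simp: dist_real_def)
  qed (use d in auto)
qed

lemma dist_le_sum: "dist (p::real\<times>real) q \<le> \<bar>fst p - fst q\<bar> + \<bar>snd p - snd q\<bar>"
proof -
  have "dist p q = sqrt ((dist (fst p) (fst q))\<^sup>2 + (dist (snd p) (snd q))\<^sup>2)"
    by (cases p, cases q) (simp add: dist_Pair_Pair)
  also have "\<dots> \<le> \<bar>dist (fst p) (fst q)\<bar> + \<bar>dist (snd p) (snd q)\<bar>" by (rule sqrt_sum_squares_le_sum_abs)
  finally show ?thesis by (simp add: dist_real_def)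
qed

lemma sol_facts:
  assumes "is_solution f Om x"
  shows "\<And>t. t \<ge> 0 \<Longrightarrow> x t \<in> Om"
    "\<forall>t\<ge>0. ((\<lambda>t. fst (x t)) has_real_derivative fst (f (x t))) (at t within {0..})"
    "\<forall>t\<ge>0. ((\<lambda>t. snd (x t)) has_real_derivative snd (f (x t))) (at t within {0..})"
    "continuous_on {0..} x"
    "\<forall>t\<ge>0. 0 \<le> fst (x t) \<and> fst (x t) \<le> B1"
    "\<forall>t\<ge>0. 0 \<le> snd (x t) \<and> snd (x t) \<le> B2"
proof -
  have S: "\<And>t. t \<ge> 0 \<Longrightarrow> x t \<in> Om \<and> (x has_vector_derivative f (x t)) (at t within {0..})"
    using assms unfolding is_solution_def by auto
  show "\<And>t. t \<ge> 0 \<Longrightarrow> x t \<in> Om" using S by auto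
  show "\<forall>t\<ge>0. ((\<lambda>t. fst (x t)) has_real_derivative fst (f (x t))) (at t within {0..})"
    using S comp_deriv(1) by blast
  show "\<forall>t\<ge>0. ((\<lambda>t. snd (x t)) has_real_derivative snd (f (x t))) (at t within {0..})"
    using S comp_deriv(2) by blast
  show "continuous_on {0..} x" unfolding continuous_on_eq_continuous_within
    using S has_vector_derivative_continuous by (metis atLeast_iff)
  show "\<forall>t\<ge>0. 0 \<le> fst (x t) \<and> fst (x t) \<le> B1" using S inOm by blast
  show "\<forall>t\<ge>0. 0 \<le> snd (x t) \<and> snd (x t) \<le> B2" using S inOm by blast
qed

lemma box_invariant:
  assumes sol: "is_solution f Om x"
    and x0: "x 0 \<in> {p. a1 \<le> fst p \<and> fst p \<le> b1 \<and> a2 \<le> snd p \<and> snd p \<le> b2}"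
    and F1b: "\<And>p. p \<in> Om \<Longrightarrow> a1 \<le> fst p \<Longrightarrow> a2 \<le> snd p \<Longrightarrow> snd p \<le> b2 \<Longrightarrow> fst p = b1 \<Longrightarrow> fst (f p) < 0"
    and F2b: "\<And>p. p \<in> Om \<Longrightarrow> a1 \<le> fst p \<Longrightarrow> fst p \<le> b1 \<Longrightarrow> a2 \<le> snd p \<Longrightarrow> snd p = b2 \<Longrightarrow> snd (f p) < 0"
    and F1a: "a1 \<le> 0 \<or> (\<forall>p\<in>Om. fst p = a1 \<longrightarrow> a2 \<le> snd p \<longrightarrow> snd p \<le> b2 \<longrightarrow> fst (f p) > 0)"
    and F2a: "a2 \<le> 0 \<or> (\<forall>p\<in>Om. snd p = a2 \<longrightarrow> a1 \<le> fst p \<longrightarrow> fst p \<le> b1 \<longrightarrow> snd (f p) > 0)"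
  shows "\<forall>t\<ge>0. a1 \<le> fst (x t) \<and> fst (x t) \<le> b1 \<and> a2 \<le> snd (x t) \<and> snd (x t) \<le> b2"
proof (rule ccontr)
  define K where "K = {p. a1 \<le> fst p \<and> fst p \<le> b1 \<and> a2 \<le> snd p \<and> snd p \<le> b2}"
  assume "\<not> ?thesis"
  then obtain s1 where s1: "s1 \<ge> 0" "x s1 \<notin> K" by (auto simp: K_def)
  have clK: "closed K" unfolding K_def
    by (intro closed_Collect_conj closed_Collect_le continuous_on_fst continuous_on_snd continuous_on_id continuous_on_const)
  from first_exit[OF sol_facts(4)[OF sol] clK _ s1] x0
  obtain s where s: "s \<ge> 0" "x s \<in> K" "\<forall>d>0. \<exists>t. s < t \<and> t < s + d \<and> x t \<notin> K"
    by (auto simp: K_def)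
  have xsO: "x s \<in> Om" using sol_facts(1)[OF sol s(1)] .
  have D1: "((\<lambda>t. fst (x t)) has_real_derivative fst (f (x s))) (at s within {0..})"
    using sol_facts(2)[OF sol] s by auto
  have D2: "((\<lambda>t. snd (x t)) has_real_derivative snd (f (x s))) (at s within {0..})"
    using sol_facts(3)[OF sol] s by auto
  obtain d1 where d1: "d1 > 0" "\<forall>h. 0 < h \<and> h < d1 \<longrightarrow> fst (x (s + h)) \<le> b1"
    using stay_below[OF D1 s(1), of b1] s(2) F1b[OF xsO] by (auto simp: K_def)
  obtain d2 where d2: "d2 > 0" "\<forall>h. 0 < h \<and> h < d2 \<longrightarrow> snd (x (s + h)) \<le> b2"
    using stay_below[OF D2 s(1), of b2] s(2) F2b[OF xsO] by (auto simp: K_def)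
  have "\<exists>d>0. \<forall>h. 0 < h \<and> h < d \<longrightarrow> a1 \<le> fst (x (s + h))"
  proof (cases "a1 \<le> 0")
    case True
    then show ?thesis using sol_facts(5)[OF sol] s(1)
      by (intro exI[of _ 1]) (auto intro: order_trans)
  next
    case False
    then show ?thesis using stay_above[OF D1 s(1), of a1] s(2) F1a xsO by (auto simp: K_def)
  qed
  then obtain d3 where d3: "d3 > 0" "\<forall>h. 0 < h \<and> h < d3 \<longrightarrow> a1 \<le> fst (x (s + h))" by auto
  have "\<exists>d>0. \<forall>h. 0 < h \<and> h < d \<longrightarrow> a2 \<le> snd (x (s + h))"
  proof (cases "a2 \<le> 0")
    case True
    then show ?thesis using sol_facts(6)[OF sol] s(1)
      by (intro exI[of _ 1]) (auto intro: order_trans)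
  next
    case False
    then show ?thesis using stay_above[OF D2 s(1), of a2] s(2) F2a xsO by (auto simp: K_def)
  qed
  then obtain d4 where d4: "d4 > 0" "\<forall>h. 0 < h \<and> h < d4 \<longrightarrow> a2 \<le> snd (x (s + h))" by auto
  define d where "d = min (min d1 d2) (min d3 d4)"
  have "d > 0" using d1 d2 d3 d4 by (simp add: d_def)
  then obtain t where t: "s < t" "t < s + d" "x t \<notin> K" using s(3) by auto
  define h where "h = t - s"
  have h: "0 < h" "h < d1" "h < d2" "h < d3" "h < d4" using t by (auto simp: h_def d_def)
  have "x (s + h) \<in> K" using d1 d2 d3 d4 h by (auto simp: K_def)
  then show False using t by (simp add: h_def)
qed


lemma limsup_nonneg:
  assumes sol: "is_solution f Om x"
  defines "L \<equiv> (Inf (UBs (\<lambda>t. fst (x t))), Inf (UBs (\<lambda>t. snd (x t))))"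
  shows "fst (f L) \<ge> 0 \<and> snd (f L) \<ge> 0"
proof -
  define u1 where "u1 = (\<lambda>t. fst (x t))"
  define u2 where "u2 = (\<lambda>t. snd (x t))"
  have b1: "\<forall>t\<ge>0. 0 \<le> u1 t \<and> u1 t \<le> B1" using sol_facts(5)[OF sol] by (simp add: u1_def)
  have b2: "\<forall>t\<ge>0. 0 \<le> u2 t \<and> u2 t \<le> B2" using sol_facts(6)[OF sol] by (simp add: u2_def)
  have D1: "\<forall>t\<ge>0. (u1 has_real_derivative fst (f (x t))) (at t within {0..})"
    using sol_facts(2)[OF sol] by (simp add: u1_def)
  have D2: "\<forall>t\<ge>0. (u2 has_real_derivative snd (f (x t))) (at t within {0..})"
    using sol_facts(3)[OF sol] by (simp add: u2_def)
  have L: "L = (Inf (UBs u1), Inf (UBs u2))" by (simp add: L_def u1_def u2_def)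
  have LO: "L \<in> Om" unfolding inOm L using UBs_props(1,2)[OF b1] UBs_props(1,2)[OF b2] by auto
  have ev1: "\<And>e. e > 0 \<Longrightarrow> \<forall>\<^sub>F t in at_top. u1 t \<le> fst L + e" using UBs_props(3)[OF b1] L by simp
  have ev2: "\<And>e. e > 0 \<Longrightarrow> \<forall>\<^sub>F t in at_top. u2 t \<le> snd L + e" using UBs_props(3)[OF b2] L by simp
  have "fst (f L) \<ge> 0"
  proof (rule ccontr)
    assume neg: "\<not> ?thesis"
    define c where "c = - fst (f L) / 2"
    have c: "c > 0" using neg by (simp add: c_def)
    obtain d where d: "d > 0" "\<forall>y\<in>Om. dist y L < d \<longrightarrow> \<bar>fst (f y) - fst (f L)\<bar> < c"
      using cont_at[OF LO c] by auto
    define \<delta> where "\<delta> = d / 3"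
    have \<delta>: "\<delta> > 0" using d by (simp add: \<delta>_def)
    have "\<forall>\<^sub>F t in at_top. u1 t \<ge> Inf (UBs u1) - \<delta> \<longrightarrow> fst (f (x t)) \<le> -c"
      using ev1[OF \<delta>] ev2[OF \<delta>] eventually_ge_at_top[of 0]
    proof eventually_elim
      case (elim t)
      have xt: "x t \<in> Om" using sol_facts(1)[OF sol] elim by auto
      define y' where "y' = (fst (x t), min (snd L + \<delta>) B2)"
      have LB: "0 \<le> snd L" "snd L \<le> B2" using LO inOm by auto
      have y'O: "y' \<in> Om" using xt LB \<delta> B unfolding inOm y'_def by auto
      have le: "fst (f (x t)) \<le> fst (f y')"
        by (rule mono1[OF xt y'O]) (use elim xt inOm in \<open>auto simp: y'_def u2_def\<close>)
      show ?case
      proof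
        assume a: "Inf (UBs u1) - \<delta> \<le> u1 t"
        have "dist y' L \<le> \<bar>fst y' - fst L\<bar> + \<bar>snd y' - snd L\<bar>" by (rule dist_le_sum)
        also have "\<bar>fst y' - fst L\<bar> \<le> \<delta>" using a elim by (auto simp: y'_def L u1_def)
        also have "\<bar>snd y' - snd L\<bar> \<le> \<delta>" using LB \<delta> by (auto simp: y'_def)
        finally have "dist y' L < d" using \<delta> d by (simp add: \<delta>_def)
        then have "\<bar>fst (f y') - fst (f L)\<bar> < c" using d y'O by auto
        then show "fst (f (x t)) \<le> -c" using le by (simp add: c_def)
      qed
    qed
    then show False using limsup_contra[OF D1 b1 \<delta> c] by blast
  qed
  moreover have "snd (f L) \<ge> 0"
  proof (rule ccontr)
    assume neg: "\<not> ?thesis"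
    define c where "c = - snd (f L) / 2"
    have c: "c > 0" using neg by (simp add: c_def)
    obtain d where d: "d > 0" "\<forall>y\<in>Om. dist y L < d \<longrightarrow> \<bar>snd (f y) - snd (f L)\<bar> < c"
      using cont_at[OF LO c] by auto
    define \<delta> where "\<delta> = d / 3"
    have \<delta>: "\<delta> > 0" using d by (simp add: \<delta>_def)
    have "\<forall>\<^sub>F t in at_top. u2 t \<ge> Inf (UBs u2) - \<delta> \<longrightarrow> snd (f (x t)) \<le> -c"
      using ev1[OF \<delta>] ev2[OF \<delta>] eventually_ge_at_top[of 0]
    proof eventually_elim
      case (elim t)
      have xt: "x t \<in> Om" using sol_facts(1)[OF sol] elim by auto
      define y' where "y' = (min (fst L + \<delta>) B1, snd (x t))"
      have LB: "0 \<le> fst L" "fst L \<le> B1" using LO inOm by auto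
      have y'O: "y' \<in> Om" using xt LB \<delta> B unfolding inOm y'_def by auto
      have le: "snd (f (x t)) \<le> snd (f y')"
        by (rule mono2[OF xt y'O]) (use elim xt inOm in \<open>auto simp: y'_def u1_def\<close>)
      show ?case
      proof
        assume a: "Inf (UBs u2) - \<delta> \<le> u2 t"
        have "dist y' L \<le> \<bar>fst y' - fst L\<bar> + \<bar>snd y' - snd L\<bar>" by (rule dist_le_sum)
        also have "\<bar>snd y' - snd L\<bar> \<le> \<delta>" using a elim by (auto simp: y'_def L u2_def)
        also have "\<bar>fst y' - fst L\<bar> \<le> \<delta>" using LB \<delta> by (auto simp: y'_def)
        finally have "dist y' L < d" using \<delta> d by (simp add: \<delta>_def)
        then have "\<bar>snd (f y') - snd (f L)\<bar> < c" using d y'O by auto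
        then show "snd (f (x t)) \<le> -c" using le by (simp add: c_def)
      qed
    qed
    then show False using limsup_contra[OF D2 b2 \<delta> c] by blast
  qed
  ultimately show ?thesis by auto
qed


lemma liminf_nonpos:
  assumes sol: "is_solution f Om x"
  defines "L \<equiv> (Sup (LBs (\<lambda>t. fst (x t))), Sup (LBs (\<lambda>t. snd (x t))))"
  shows "fst (f L) \<le> 0 \<and> snd (f L) \<le> 0"
proof -
  define u1 where "u1 = (\<lambda>t. fst (x t))"
  define u2 where "u2 = (\<lambda>t. snd (x t))"
  have b1: "\<forall>t\<ge>0. 0 \<le> u1 t \<and> u1 t \<le> B1" using sol_facts(5)[OF sol] by (simp add: u1_def)
  have b2: "\<forall>t\<ge>0. 0 \<le> u2 t \<and> u2 t \<le> B2" using sol_facts(6)[OF sol] by (simp add: u2_def)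
  have D1: "\<forall>t\<ge>0. (u1 has_real_derivative fst (f (x t))) (at t within {0..})"
    using sol_facts(2)[OF sol] by (simp add: u1_def)
  have D2: "\<forall>t\<ge>0. (u2 has_real_derivative snd (f (x t))) (at t within {0..})"
    using sol_facts(3)[OF sol] by (simp add: u2_def)
  have L: "L = (Sup (LBs u1), Sup (LBs u2))" by (simp add: L_def u1_def u2_def)
  have LO: "L \<in> Om" unfolding inOm L using LBs_props(1,2)[OF b1] LBs_props(1,2)[OF b2] by auto
  have ev1: "\<And>e. e > 0 \<Longrightarrow> \<forall>\<^sub>F t in at_top. fst L - e \<le> u1 t" using LBs_props(3)[OF b1] L by simp
  have ev2: "\<And>e. e > 0 \<Longrightarrow> \<forall>\<^sub>F t in at_top. snd L - e \<le> u2 t" using LBs_props(3)[OF b2] L by simp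
  have "fst (f L) \<le> 0"
  proof (rule ccontr)
    assume neg: "\<not> ?thesis"
    define c where "c = fst (f L) / 2"
    have c: "c > 0" using neg by (simp add: c_def)
    obtain d where d: "d > 0" "\<forall>y\<in>Om. dist y L < d \<longrightarrow> \<bar>fst (f y) - fst (f L)\<bar> < c"
      using cont_at[OF LO c] by auto
    define \<delta> where "\<delta> = d / 3"
    have \<delta>: "\<delta> > 0" using d by (simp add: \<delta>_def)
    have "\<forall>\<^sub>F t in at_top. u1 t \<le> Sup (LBs u1) + \<delta> \<longrightarrow> fst (f (x t)) \<ge> c"
      using ev1[OF \<delta>] ev2[OF \<delta>] eventually_ge_at_top[of 0]
    proof eventually_elim
      case (elim t)
      have xt: "x t \<in> Om" using sol_facts(1)[OF sol] elim by auto
      define y' where "y' = (fst (x t), max (snd L - \<delta>) 0)"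
      have LB: "0 \<le> snd L" "snd L \<le> B2" using LO inOm by auto
      have y'O: "y' \<in> Om" using xt LB \<delta> B unfolding inOm y'_def by auto
      have le: "fst (f y') \<le> fst (f (x t))"
        by (rule mono1[OF y'O xt]) (use elim xt inOm in \<open>auto simp: y'_def u2_def\<close>)
      show ?case
      proof
        assume a: "u1 t \<le> Sup (LBs u1) + \<delta>"
        have "dist y' L \<le> \<bar>fst y' - fst L\<bar> + \<bar>snd y' - snd L\<bar>" by (rule dist_le_sum)
        also have "\<bar>fst y' - fst L\<bar> \<le> \<delta>" using a elim by (auto simp: y'_def L u1_def)
        also have "\<bar>snd y' - snd L\<bar> \<le> \<delta>" using LB \<delta> by (auto simp: y'_def)
        finally have "dist y' L < d" using \<delta> d by (simp add: \<delta>_def)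
        then have "\<bar>fst (f y') - fst (f L)\<bar> < c" using d y'O by auto
        then have "fst (f L) - c < fst (f y')" by (simp add: abs_less_iff)
        then show "fst (f (x t)) \<ge> c" using le by (simp add: c_def)
      qed
    qed
    then show False using liminf_contra[OF D1 b1 \<delta> c] by blast
  qed
  moreover have "snd (f L) \<le> 0"
  proof (rule ccontr)
    assume neg: "\<not> ?thesis"
    define c where "c = snd (f L) / 2"
    have c: "c > 0" using neg by (simp add: c_def)
    obtain d where d: "d > 0" "\<forall>y\<in>Om. dist y L < d \<longrightarrow> \<bar>snd (f y) - snd (f L)\<bar> < c"
      using cont_at[OF LO c] by auto
    define \<delta> where "\<delta> = d / 3"
    have \<delta>: "\<delta> > 0" using d by (simp add: \<delta>_def)
    have "\<forall>\<^sub>F t in at_top. u2 t \<le> Sup (LBs u2) + \<delta> \<longrightarrow> snd (f (x t)) \<ge> c"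
      using ev1[OF \<delta>] ev2[OF \<delta>] eventually_ge_at_top[of 0]
    proof eventually_elim
      case (elim t)
      have xt: "x t \<in> Om" using sol_facts(1)[OF sol] elim by auto
      define y' where "y' = (max (fst L - \<delta>) 0, snd (x t))"
      have LB: "0 \<le> fst L" "fst L \<le> B1" using LO inOm by auto
      have y'O: "y' \<in> Om" using xt LB \<delta> B unfolding inOm y'_def by auto
      have le: "snd (f y') \<le> snd (f (x t))"
        by (rule mono2[OF y'O xt]) (use elim xt inOm in \<open>auto simp: y'_def u1_def\<close>)
      show ?case
      proof
        assume a: "u2 t \<le> Sup (LBs u2) + \<delta>"
        have "dist y' L \<le> \<bar>fst y' - fst L\<bar> + \<bar>snd y' - snd L\<bar>" by (rule dist_le_sum)
        also have "\<bar>snd y' - snd L\<bar> \<le> \<delta>" using a elim by (auto simp: y'_def L u2_def)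
        also have "\<bar>fst y' - fst L\<bar> \<le> \<delta>" using LB \<delta> by (auto simp: y'_def)
        finally have "dist y' L < d" using \<delta> d by (simp add: \<delta>_def)
        then have "\<bar>snd (f y') - snd (f L)\<bar> < c" using d y'O by auto
        then have "snd (f L) - c < snd (f y')" by (simp add: abs_less_iff)
        then show "snd (f (x t)) \<ge> c" using le by (simp add: c_def)
      qed
    qed
    then show False using liminf_contra[OF D2 b2 \<delta> c] by blast
  qed
  ultimately show ?thesis by auto
qed

lemma convergence:
  assumes sol: "is_solution f Om x"
  shows "(x \<longlongrightarrow> xb) at_top"
proof -
  define u1 where "u1 = (\<lambda>t. fst (x t))"
  define u2 where "u2 = (\<lambda>t. snd (x t))"
  have b1: "\<forall>t\<ge>0. 0 \<le> u1 t \<and> u1 t \<le> B1" using sol_facts(5)[OF sol] by (simp add: u1_def)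
  have b2: "\<forall>t\<ge>0. 0 \<le> u2 t \<and> u2 t \<le> B2" using sol_facts(6)[OF sol] by (simp add: u2_def)
  define L where "L = (Inf (UBs u1), Inf (UBs u2))"
  define l where "l = (Sup (LBs u1), Sup (LBs u2))"
  have LO: "L \<in> Om" unfolding inOm L_def using UBs_props(1,2)[OF b1] UBs_props(1,2)[OF b2] by auto
  have lO: "l \<in> Om" unfolding inOm l_def using LBs_props(1,2)[OF b1] LBs_props(1,2)[OF b2] by auto
  have "fst (f L) \<ge> 0 \<and> snd (f L) \<ge> 0" using limsup_nonneg[OF sol] by (simp add: L_def u1_def u2_def)
  then have Lx: "fst L \<le> fst xb" "snd L \<le> snd xb" using up[OF LO] by auto
  have "fst (f l) \<le> 0 \<and> snd (f l) \<le> 0" using liminf_nonpos[OF sol] by (simp add: l_def u1_def u2_def)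
  then have lx: "fst xb \<le> fst l" "snd xb \<le> snd l" using low[OF lO] by auto
  have t1: "(u1 \<longlongrightarrow> fst xb) at_top"
  proof (rule order_tendstoI)
    fix a assume a: "a < fst xb"
    then have "fst l - a > 0" using lx by auto
    from LBs_props(3)[OF b1 half_gt_zero[OF this]]
    show "\<forall>\<^sub>F t in at_top. a < u1 t"
      by (rule eventually_mono) (use a lx in \<open>auto simp: l_def field_simps\<close>)
  next
    fix a assume a: "a > fst xb"
    then have "a - fst L > 0" using Lx by auto
    from UBs_props(3)[OF b1 half_gt_zero[OF this]]
    show "\<forall>\<^sub>F t in at_top. u1 t < a"
      by (rule eventually_mono) (use a Lx in \<open>auto simp: L_def field_simps\<close>)
  qed
  have t2: "(u2 \<longlongrightarrow> snd xb) at_top"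
  proof (rule order_tendstoI)
    fix a assume a: "a < snd xb"
    then have "snd l - a > 0" using lx by auto
    from LBs_props(3)[OF b2 half_gt_zero[OF this]]
    show "\<forall>\<^sub>F t in at_top. a < u2 t"
      by (rule eventually_mono) (use a lx in \<open>auto simp: l_def field_simps\<close>)
  next
    fix a assume a: "a > snd xb"
    then have "a - snd L > 0" using Lx by auto
    from UBs_props(3)[OF b2 half_gt_zero[OF this]]
    show "\<forall>\<^sub>F t in at_top. u2 t < a"
      by (rule eventually_mono) (use a Lx in \<open>auto simp: L_def field_simps\<close>)
  qed
  have "((\<lambda>t. (u1 t, u2 t)) \<longlongrightarrow> (fst xb, snd xb)) at_top" by (rule tendsto_Pair[OF t1 t2])
  then show ?thesis by (simp add: u1_def u2_def)
qed


lemma cont2_line: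
  assumes "0 \<le> t" "t \<le> B1" "0 \<le> a" "b \<le> B2"
  shows "continuous_on {a..b} (\<lambda>y. snd (f (t, y)))"
proof -
  have c: "continuous_on Om (\<lambda>p. snd (f p))" using cont by (intro continuous_intros)
  have "continuous_on {a..b} (\<lambda>y. (t, y))" by (intro continuous_intros)
  moreover have "(\<lambda>y. (t, y)) ` {a..b} \<subseteq> Om" using assms by (auto simp: Om_def)
  ultimately show ?thesis using continuous_on_compose2[OF c] by blast
qed

lemma upper_corner:
  assumes e: "e > 0"
  shows "\<exists>b1 b2. fst xb < b1 \<and> b1 \<le> fst xb + e \<and> b1 \<le> B1 \<and> snd xb < b2 \<and> b2 \<le> snd xb + 2*e
     \<and> b2 \<le> B2 \<and> fst (f (b1, b2)) < 0 \<and> snd (f (b1, b2)) < 0"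
proof -
  define x1 where "x1 = fst xb"
  define x2 where "x2 = snd xb"
  have xb: "xb = (x1, x2)" by (simp add: x1_def x2_def)
  have x: "0 \<le> x1" "x1 < B1" "0 \<le> x2" "x2 < B2" using xbO xbB inOm by (auto simp: x1_def x2_def)
  define \<sigma> where "\<sigma> = min e ((B2 - x2)/2)"
  have \<sigma>: "\<sigma> > 0" "\<sigma> \<le> e" "\<sigma> \<le> (B2 - x2)/2" using e x by (auto simp: \<sigma>_def min_def)
  define Y where "Y = x2 + \<sigma>"
  have Y: "x2 < Y" "Y < B2" using \<sigma> x by (auto simp: Y_def)
  define q where "q = (x1, Y)"
  have qO: "q \<in> Om" using x Y by (auto simp: q_def Om_def)
  have "snd (f q) < 0" using strict2[OF xbO qO] Y fxb by (auto simp: q_def xb)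
  then have nq: "- snd (f q) > 0" by simp
  obtain d where d: "d > 0" "\<forall>y\<in>Om. dist y q < d \<longrightarrow> \<bar>snd (f y) - snd (f q)\<bar> < - snd (f q)"
    using cont_at[OF qO nq] by auto
  define m where "m = min (min (d/2) e) ((B1 - x1)/2)"
  have tm: "m \<le> d/2" "m \<le> e" "m \<le> (B1 - x1)/2" "m > 0"
    using d e x by (auto simp: m_def min_def)
  define t where "t = x1 + m"
  have t: "x1 < t" "t \<le> x1 + e" "t < B1" "t - x1 < d" using tm d x unfolding t_def by (auto simp: field_simps)
  define p where "p = (t, Y)"
  have pO: "p \<in> Om" using x Y t by (auto simp: p_def Om_def)
  have "dist p q \<le> \<bar>fst p - fst q\<bar> + \<bar>snd p - snd q\<bar>" by (rule dist_le_sum)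
  then have "dist p q < d" using t by (simp add: p_def q_def)
  then have "\<bar>snd (f p) - snd (f q)\<bar> < - snd (f q)" using d pO by auto
  then have gY: "snd (f (t, Y)) < 0" by (simp add: p_def abs_less_iff)
  have tx2O: "(t, x2) \<in> Om" using x t by (auto simp: Om_def)
  have "snd (f xb) \<le> snd (f (t, x2))" by (rule mono2[OF xbO tx2O]) (use t in \<open>auto simp: xb\<close>)
  then have gx2: "snd (f (t, x2)) \<ge> 0" using fxb by simp
  have "\<exists>y. x2 \<le> y \<and> y \<le> Y \<and> snd (f (t, y)) = 0"
    by (rule IVT2'[of "\<lambda>y. snd (f (t, y))"]) (use gY gx2 Y x t in \<open>auto intro: cont2_line\<close>)
  then obtain y0 where y0: "x2 \<le> y0" "y0 \<le> Y" "snd (f (t, y0)) = 0" by auto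
  define p0 where "p0 = (t, y0)"
  have p0O: "p0 \<in> Om" using x t y0 Y by (auto simp: p0_def Om_def)
  have f1p0: "fst (f p0) < 0"
  proof (rule ccontr)
    assume "\<not> ?thesis"
    then have "fst p0 \<le> fst xb" using up[OF p0O] y0 by (auto simp: p0_def)
    then show False using t by (simp add: p0_def xb)
  qed
  then have nf: "- fst (f p0) > 0" by simp
  obtain d' where d': "d' > 0" "\<forall>y\<in>Om. dist y p0 < d' \<longrightarrow> \<bar>fst (f y) - fst (f p0)\<bar> < - fst (f p0)"
    using cont_at[OF p0O nf] by auto
  define \<eta> where "\<eta> = min (d'/2) (min (e/2) ((B2 - y0)/2))"
  have \<eta>: "\<eta> > 0" "\<eta> \<le> d'/2" "\<eta> \<le> e/2" "\<eta> \<le> (B2 - y0)/2" using d' e y0 Y by (auto simp: \<eta>_def min_def)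
  define b where "b = (t, y0 + \<eta>)"
  have bO: "b \<in> Om" using x t y0 Y \<eta> by (auto simp: b_def Om_def)
  have "dist b p0 \<le> \<bar>fst b - fst p0\<bar> + \<bar>snd b - snd p0\<bar>" by (rule dist_le_sum)
  then have "dist b p0 < d'" using \<eta> d' by (simp add: b_def p0_def)
  then have "\<bar>fst (f b) - fst (f p0)\<bar> < - fst (f p0)" using d' bO by auto
  then have f1b: "fst (f b) < 0" by (simp add: abs_less_iff)
  have "snd (f b) < 0" using strict2[OF p0O bO] y0 \<eta> by (auto simp: b_def p0_def)
  then show ?thesis using f1b t y0 \<eta> \<sigma> Y bO
    by (intro exI[of _ t] exI[of _ "y0 + \<eta>"]) (auto simp: b_def x1_def x2_def Y_def Om_def)
qed


lemma lower_corner: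
  assumes e: "e > 0"
  shows "\<exists>a1 a2. 0 \<le> a1 \<and> a1 \<le> fst xb \<and> fst xb - a1 \<le> e \<and> (a1 < fst xb \<or> a1 = 0)
     \<and> 0 \<le> a2 \<and> a2 \<le> snd xb \<and> snd xb - a2 \<le> 2*e \<and> (a2 < snd xb \<or> a2 = 0)
     \<and> (a1 = 0 \<or> fst (f (a1, a2)) > 0) \<and> (a2 = 0 \<or> snd (f (a1, a2)) > 0)"
proof -
  define x1 where "x1 = fst xb"
  define x2 where "x2 = snd xb"
  have xb: "xb = (x1, x2)" by (simp add: x1_def x2_def)
  have x: "0 \<le> x1" "x1 < B1" "0 \<le> x2" "x2 < B2" using xbO xbB inOm by (auto simp: x1_def x2_def)
  show ?thesis
  proof (cases "x1 = 0")
    case True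
    define a2 where "a2 = max (x2 - e) 0"
    have a2: "0 \<le> a2" "a2 \<le> x2" "x2 - a2 \<le> e" "a2 \<noteq> 0 \<Longrightarrow> a2 = x2 - e" "a2 < x2 \<or> a2 = 0"
      using x e by (auto simp: a2_def max_def)
    have "snd (f (0, a2)) > 0" if "a2 \<noteq> 0"
    proof -
      have aO: "(0, a2) \<in> Om" using a2 x by (auto simp: Om_def)
      have "a2 < x2" using a2(4)[OF that] e by auto
      then show ?thesis using strict2[OF aO xbO] True fxb by (auto simp: xb)
    qed
    then show ?thesis using a2 e True
      by (intro exI[of _ 0] exI[of _ a2]) (auto simp: x1_def x2_def)
  next
    case False
    then have x1p: "x1 > 0" using x by auto
    show ?thesis
    proof (cases "x2 = 0")
      case True
      define m where "m = min (e/2) (x1/2)"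
      have m: "m > 0" "m \<le> e/2" "m \<le> x1/2" using e x1p by (auto simp: m_def min_def)
      define t where "t = x1 - m"
      have t: "0 < t" "t < x1" "x1 - t \<le> e" using m unfolding t_def by (auto simp: field_simps)
      have aO: "(t, 0) \<in> Om" using t x by (auto simp: Om_def)
      have "snd (f (t, 0)) \<le> snd (f xb)" by (rule mono2[OF aO xbO]) (use t True in \<open>auto simp: xb\<close>)
      then have s0: "snd (f (t, 0)) \<le> 0" using fxb by simp
      have "fst (f (t, 0)) > 0"
      proof (rule ccontr)
        assume "\<not> ?thesis"
        then have "fst xb \<le> t" using low[OF aO] s0 by auto
        then show False using t by (simp add: xb)
      qed
      then show ?thesis using t True
        by (intro exI[of _ t] exI[of _ 0]) (auto simp: x1_def x2_def)
    next
      case False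
      then have x2p: "x2 > 0" using x by auto
      define \<sigma> where "\<sigma> = min e (x2/2)"
      have \<sigma>: "\<sigma> > 0" "\<sigma> \<le> e" "\<sigma> \<le> x2/2" using e x2p by (auto simp: \<sigma>_def min_def)
      define Y where "Y = x2 - \<sigma>"
      have Y: "0 < Y" "Y < x2" "x2 - Y \<le> e" using \<sigma> unfolding Y_def by (auto simp: field_simps)
      define q where "q = (x1, Y)"
      have qO: "q \<in> Om" using x Y by (auto simp: q_def Om_def)
      have "snd (f q) > 0" using strict2[OF qO xbO] Y fxb by (auto simp: q_def xb)
      then obtain d where d: "d > 0" "\<forall>y\<in>Om. dist y q < d \<longrightarrow> \<bar>snd (f y) - snd (f q)\<bar> < snd (f q)"
        using cont_at[OF qO] by blast
      define m where "m = min (min (d/2) (e/2)) (x1/2)"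
      have m: "m > 0" "m \<le> d/2" "m \<le> e/2" "m \<le> x1/2" using e x1p d by (auto simp: m_def min_def)
      define t where "t = x1 - m"
      have t: "0 < t" "t < x1" "x1 - t \<le> e" "x1 - t < d" using m unfolding t_def by (auto simp: field_simps)
      define p where "p = (t, Y)"
      have pO: "p \<in> Om" using x Y t by (auto simp: p_def Om_def)
      have "dist p q \<le> \<bar>fst p - fst q\<bar> + \<bar>snd p - snd q\<bar>" by (rule dist_le_sum)
      then have "dist p q < d" using t by (simp add: p_def q_def)
      then have "\<bar>snd (f p) - snd (f q)\<bar> < snd (f q)" using d pO by auto
      then have gY: "snd (f (t, Y)) > 0" by (simp add: p_def abs_less_iff)
      have tx2O: "(t, x2) \<in> Om" using x t by (auto simp: Om_def)
      have "snd (f (t, x2)) \<le> snd (f xb)" by (rule mono2[OF tx2O xbO]) (use t in \<open>auto simp: xb\<close>)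
      then have gx2: "snd (f (t, x2)) \<le> 0" using fxb by simp
      have "\<exists>y. Y \<le> y \<and> y \<le> x2 \<and> snd (f (t, y)) = 0"
        by (rule IVT2'[of "\<lambda>y. snd (f (t, y))"]) (use gY gx2 Y x t in \<open>auto intro: cont2_line\<close>)
      then obtain y0 where y0: "Y \<le> y0" "y0 \<le> x2" "snd (f (t, y0)) = 0" by auto
      define p0 where "p0 = (t, y0)"
      have p0O: "p0 \<in> Om" using x t y0 Y by (auto simp: p0_def Om_def)
      have f1p0: "fst (f p0) > 0"
      proof (rule ccontr)
        assume "\<not> ?thesis"
        then have "fst xb \<le> fst p0" using low[OF p0O] y0 by (auto simp: p0_def)
        then show False using t by (simp add: p0_def xb)
      qed
      obtain d' where d': "d' > 0" "\<forall>y\<in>Om. dist y p0 < d' \<longrightarrow> \<bar>fst (f y) - fst (f p0)\<bar> < fst (f p0)"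
        using cont_at[OF p0O f1p0] by auto
      define \<eta> where "\<eta> = min (d'/2) (e/2)"
      have \<eta>: "\<eta> > 0" "\<eta> \<le> d'/2" "\<eta> \<le> e/2" using d' e by (auto simp: \<eta>_def min_def)
      define a2 where "a2 = max (y0 - \<eta>) 0"
      have a2: "0 \<le> a2" "a2 \<le> y0" "y0 - a2 \<le> \<eta>" "a2 \<noteq> 0 \<Longrightarrow> a2 = y0 - \<eta>"
        using \<eta> Y y0 by (auto simp: a2_def max_def)
      define a where "a = (t, a2)"
      have aO: "a \<in> Om" using x t y0 a2 by (auto simp: a_def Om_def)
      have "dist a p0 \<le> \<bar>fst a - fst p0\<bar> + \<bar>snd a - snd p0\<bar>" by (rule dist_le_sum)
      then have "dist a p0 < d'" using \<eta> d' a2 by (simp add: a_def p0_def)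
      then have "\<bar>fst (f a) - fst (f p0)\<bar> < fst (f p0)" using d' aO by auto
      then have f1a: "fst (f a) > 0" by (simp add: abs_less_iff)
      have f2a: "snd (f a) > 0" if "a2 \<noteq> 0"
      proof -
        have "a2 < y0" using a2(4)[OF that] \<eta> by auto
        then show ?thesis using strict2[OF aO p0O] y0 by (auto simp: a_def p0_def)
      qed
      have a2lt: "a2 < x2 \<or> a2 = 0" using a2 y0 \<eta> by (cases "a2 = 0") auto
      have "x2 - a2 \<le> 2 * e" using a2 y0 Y \<eta> by (simp add: field_simps)
      then show ?thesis using f1a f2a t a2 a2lt y0
        by (intro exI[of _ t] exI[of _ a2]) (auto simp: x1_def x2_def a_def)
    qed
  qed
qed

lemma stability:
  assumes e: "e > 0"
  shows "\<exists>\<delta>>0. \<forall>x. is_solution f Om x \<and> dist (x 0) xb < \<delta> \<longrightarrow> (\<forall>t\<ge>0. dist (x t) xb < e)"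
proof -
  define e' where "e' = e / 4"
  have e': "e' > 0" using e by (simp add: e'_def)
  obtain b1 b2 where b: "fst xb < b1" "b1 \<le> fst xb + e'" "b1 \<le> B1" "snd xb < b2" "b2 \<le> snd xb + 2*e'"
     "b2 \<le> B2" "fst (f (b1, b2)) < 0" "snd (f (b1, b2)) < 0"
    using upper_corner[OF e'] by blast
  obtain a1 a2 where a: "0 \<le> a1" "a1 \<le> fst xb" "fst xb - a1 \<le> e'" "a1 < fst xb \<or> a1 = 0"
     "0 \<le> a2" "a2 \<le> snd xb" "snd xb - a2 \<le> 2*e'" "a2 < snd xb \<or> a2 = 0"
     "a1 = 0 \<or> fst (f (a1, a2)) > 0" "a2 = 0 \<or> snd (f (a1, a2)) > 0"
    using lower_corner[OF e'] by blast
  have x: "0 \<le> fst xb" "0 \<le> snd xb" using xbO inOm by auto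
  have bO: "(b1, b2) \<in> Om" using b x by (auto simp: Om_def)
  have aO: "(a1, a2) \<in> Om" using a xbO inOm by (auto simp: Om_def)
  define m1 where "m1 = (if a1 < fst xb then fst xb - a1 else 1)"
  define m2 where "m2 = (if a2 < snd xb then snd xb - a2 else 1)"
  define \<delta> where "\<delta> = min (min (b1 - fst xb) (b2 - snd xb)) (min m1 m2)"
  have \<delta>: "\<delta> > 0" "\<delta> \<le> b1 - fst xb" "\<delta> \<le> b2 - snd xb" "\<delta> \<le> m1" "\<delta> \<le> m2"
    using b by (auto simp: \<delta>_def m1_def m2_def min_def)
  show ?thesis
  proof (intro exI[of _ \<delta>] conjI allI impI \<delta>(1))
    fix x t assume xa: "is_solution f Om x \<and> dist (x 0) xb < \<delta>" and t: "(t::real) \<ge> 0"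
    have sol: "is_solution f Om x" using xa by auto
    have x0O: "x 0 \<in> Om" using sol_facts(1)[OF sol, of 0] by simp
    have d1: "\<bar>fst (x 0) - fst xb\<bar> < \<delta>" using dist_fst_le[of "x 0" xb] xa by (simp add: dist_real_def)
    have d2: "\<bar>snd (x 0) - snd xb\<bar> < \<delta>" using dist_snd_le[of "x 0" xb] xa by (simp add: dist_real_def)
    have x0a1: "a1 \<le> fst (x 0)"
    proof (cases "a1 < fst xb")
      case True then show ?thesis using d1 \<delta> by (auto simp: m1_def)
    next
      case False then show ?thesis using a x0O inOm by auto
    qed
    have x0a2: "a2 \<le> snd (x 0)"
    proof (cases "a2 < snd xb")
      case True then show ?thesis using d2 \<delta> by (auto simp: m2_def)
    next
      case False then show ?thesis using a x0O inOm by auto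
    qed
    have inv: "\<forall>t\<ge>0. a1 \<le> fst (x t) \<and> fst (x t) \<le> b1 \<and> a2 \<le> snd (x t) \<and> snd (x t) \<le> b2"
    proof (rule box_invariant[OF sol])
      show "x 0 \<in> {p. a1 \<le> fst p \<and> fst p \<le> b1 \<and> a2 \<le> snd p \<and> snd p \<le> b2}"
        using x0a1 x0a2 d1 d2 \<delta> by auto
      show "fst (f p) < 0" if "p \<in> Om" "a1 \<le> fst p" "a2 \<le> snd p" "snd p \<le> b2" "fst p = b1" for p
        using mono1[OF that(1) bO] that b by auto
      show "snd (f p) < 0" if "p \<in> Om" "a1 \<le> fst p" "fst p \<le> b1" "a2 \<le> snd p" "snd p = b2" for p
        using mono2[OF that(1) bO] that b by auto
      show "a1 \<le> 0 \<or> (\<forall>p\<in>Om. fst p = a1 \<longrightarrow> a2 \<le> snd p \<longrightarrow> snd p \<le> b2 \<longrightarrow> fst (f p) > 0)"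
        using a(9) mono1[OF aO] by fastforce
      show "a2 \<le> 0 \<or> (\<forall>p\<in>Om. snd p = a2 \<longrightarrow> a1 \<le> fst p \<longrightarrow> fst p \<le> b1 \<longrightarrow> snd (f p) > 0)"
        using a(10) mono2[OF aO] by fastforce
    qed
    then have i: "a1 \<le> fst (x t)" "fst (x t) \<le> b1" "a2 \<le> snd (x t)" "snd (x t) \<le> b2" using t by auto
    have "dist (x t) xb \<le> \<bar>fst (x t) - fst xb\<bar> + \<bar>snd (x t) - snd xb\<bar>" by (rule dist_le_sum)
    also have "\<dots> \<le> e' + 2 * e'" using i a b by (intro add_mono) auto
    also have "\<dots> < e" using e by (simp add: e'_def)
    finally show "dist (x t) xb < e" .
  qed
qed

end



lemma supply_min: "0 < C \<Longrightarrow> C < B \<Longrightarrow> F > 0 \<Longrightarrow> supply_fun F B C y = min F (F / (B - C) * (B - y))"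
proof -
  assume a: "0 < C" "C < B" "F > 0"
  show ?thesis
  proof (cases "y < C")
    case True
    have "F / (B - C) * (B - y) \<ge> F / (B - C) * (B - C)"
      using a True by (intro mult_left_mono) auto
    then have "F / (B - C) * (B - y) \<ge> F" using a by simp
    then show ?thesis using True by (simp add: supply_fun_def)
  next
    case False
    have "F / (B - C) * (B - y) \<le> F / (B - C) * (B - C)"
      using a False by (intro mult_left_mono) auto
    then have "F / (B - C) * (B - y) \<le> F" using a by simp
    then show ?thesis using False by (simp add: supply_fun_def min_def)
  qed
qed

lemma demand_min: "0 < C \<Longrightarrow> F > 0 \<Longrightarrow> demand_fun F C y = min (F / C * y) F"
proof -
  assume a: "0 < C" "F > 0"
  show ?thesis
  proof (cases "y < C")
    case True
    have "F / C * y \<le> F / C * C" using a True by (intro mult_left_mono) auto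
    then show ?thesis using True a by (simp add: demand_fun_def min_def)
  next
    case False
    have "F / C * y \<ge> F / C * C" using a False by (intro mult_left_mono) auto
    then show ?thesis using False a by (simp add: demand_fun_def min_def)
  qed
qed

lemma mono_from_deriv:
  fixes g :: "real \<Rightarrow> real"
  assumes I: "connected I" and D: "\<And>s. s \<in> I \<Longrightarrow> \<exists>D>0. (g has_real_derivative D) (at s within I)"
    and s: "s \<in> I" "s' \<in> I" "s \<le> s'"
  shows "g s \<le> g s'"
proof (cases "s = s'")
  case True then show ?thesis by simp
next
  case False
  then have lt: "s < s'" using s by auto
  have sub: "{s..s'} \<subseteq> I" using connected_contains_Icc[OF I s(1,2)] .
  have "continuous (at z within I) g" if zI: "z \<in> I" for z
  proof -
    obtain Dz where "(g has_real_derivative Dz) (at z within I)" using D[OF zI] by blast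
    then show ?thesis by (rule DERIV_continuous)
  qed
  then have "continuous_on I g" by (simp add: continuous_on_eq_continuous_within)
  then have c: "continuous_on {s..s'} g" using sub by (rule continuous_on_subset)
  have "g s < g s'"
  proof (rule DERIV_pos_imp_increasing_open[OF lt _ c])
    fix z assume z: "s < z" "z < s'"
    have "{s<..<s'} \<subseteq> I" using sub by auto
    then have "interior {s<..<s'} \<subseteq> interior I" by (rule interior_mono)
    then have "z \<in> interior I" using z by auto
    then have at: "at z within I = at z" by (rule at_within_interior)
    have "z \<in> I" using z sub by auto
    from D[OF this] obtain Dz where "Dz > 0" "(g has_real_derivative Dz) (at z within I)" by blast
    then show "\<exists>y. (g has_real_derivative y) (at z) \<and> y > 0" using at by auto
  qed
  then show ?thesis by simp
qed

lemma partial2: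
  fixes r :: "real \<times> real \<Rightarrow> real"
  assumes D: "\<forall>p\<in>T. (r has_derivative r' p) (at p within T)"
    and sub: "(\<lambda>s. (a, s)) ` I \<subseteq> T" and s: "s \<in> I"
  shows "((\<lambda>s. r (a, s)) has_real_derivative r' (a, s) (0, 1)) (at s within I)"
proof -
  have p: "((\<lambda>s. (a, s)) has_derivative (\<lambda>h. (0, h))) (at s within I)"
    by (auto intro!: derivative_eq_intros)
  have "((\<lambda>s. r (a, s)) has_derivative (\<lambda>h. r' (a, s) (0, h))) (at s within I)"
    by (rule has_derivative_in_compose2[OF _ sub s p]) (use D in auto)
  moreover have "linear (r' (a, s))" using D sub s by (auto intro: has_derivative_linear)
  then have eq: "r' (a, s) (0, h) = h * r' (a, s) (0, 1)" for h
    using linear_scale[of "r' (a, s)" h "(0, 1)"] by simp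
  have "(\<lambda>h. r' (a, s) (0, h)) = (\<lambda>h. r' (a, s) (0, 1) * h)" by (rule ext) (subst eq, rule mult.commute)
  with calculation show ?thesis by (simp add: has_field_derivative_def)
qed

lemma partial1:
  fixes r :: "real \<times> real \<Rightarrow> real"
  assumes D: "\<forall>p\<in>T. (r has_derivative r' p) (at p within T)"
    and sub: "(\<lambda>s. (s, b)) ` I \<subseteq> T" and s: "s \<in> I"
  shows "((\<lambda>s. r (s, b)) has_real_derivative r' (s, b) (1, 0)) (at s within I)"
proof -
  have p: "((\<lambda>s. (s, b)) has_derivative (\<lambda>h. (h, 0))) (at s within I)"
    by (auto intro!: derivative_eq_intros)
  have "((\<lambda>s. r (s, b)) has_derivative (\<lambda>h. r' (s, b) (h, 0))) (at s within I)"
    by (rule has_derivative_in_compose2[OF _ sub s p]) (use D in auto)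
  moreover have "linear (r' (s, b))" using D sub s by (auto intro: has_derivative_linear)
  then have eq: "r' (s, b) (h, 0) = h * r' (s, b) (1, 0)" for h
    using linear_scale[of "r' (s, b)" h "(1, 0)"] by simp
  have "(\<lambda>h. r' (s, b) (h, 0)) = (\<lambda>h. r' (s, b) (1, 0) * h)" by (rule ext) (subst eq, rule mult.commute)
  with calculation show ?thesis by (simp add: has_field_derivative_def)
qed


theorem theorem2:
  fixes B1 C1 F1 B2 C2 F2 \<phi> \<alpha> r01 r02 :: real
    and \<tau>1 \<tau>2 \<tau>1' \<tau>2' :: "real \<Rightarrow> real"
    and r1 r2 :: "real \<times> real \<Rightarrow> real"
    and r1' r2' :: "real \<times> real \<Rightarrow> real \<times> real \<Rightarrow> real"
    and d11 d12 d21 d22 :: "real \<times> real \<Rightarrow> real"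
  defines "\<Omega> \<equiv> Omega B1 B2"
    and "T \<equiv> (\<lambda>x. (\<tau>1 (fst x), \<tau>2 (snd x))) ` Omega B1 B2"
    and "f \<equiv> two_route_field \<phi> B1 C1 F1 B2 C2 F2
               (routing \<alpha> r01 r1 \<tau>1 \<tau>2) (routing \<alpha> r02 r2 \<tau>1 \<tau>2)"
  assumes pos: "B1 > 0" "C1 > 0" "F1 > 0" "B2 > 0" "C2 > 0" "F2 > 0" "\<phi> > 0"
    and CB: "C1 < B1" "C2 < B2"
    and A1: "\<phi> < F1 + F2"
    and alpha: "0 < \<alpha>" "\<alpha> \<le> 1"
    and r0: "r01 \<ge> 0" "r02 \<ge> 0" "r01 + r02 = 1"
    \<comment> \<open>(A2)-(A3): tau_i C^1 and strictly increasing\<close>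
    and tau1_C1: "\<forall>s\<in>{0..B1}. (\<tau>1 has_real_derivative \<tau>1' s) (at s within {0..B1})"
                 "continuous_on {0..B1} \<tau>1'"
    and tau2_C1: "\<forall>s\<in>{0..B2}. (\<tau>2 has_real_derivative \<tau>2' s) (at s within {0..B2})"
                 "continuous_on {0..B2} \<tau>2'"
    and tau_mono: "strict_mono_on {0..B1} \<tau>1" "strict_mono_on {0..B2} \<tau>2"
    \<comment> \<open>(A2)-(A3): r_i(tau(x)) in [0,1], summing to 1 on Omega\<close>
    and r_range: "\<forall>x\<in>\<Omega>. 0 \<le> r1 (\<tau>1 (fst x), \<tau>2 (snd x)) \<and> r1 (\<tau>1 (fst x), \<tau>2 (snd x)) \<le> 1"
                 "\<forall>x\<in>\<Omega>. 0 \<le> r2 (\<tau>1 (fst x), \<tau>2 (snd x)) \<and> r2 (\<tau>1 (fst x), \<tau>2 (snd x)) \<le> 1"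
    and r_sum: "\<forall>x\<in>\<Omega>. r1 (\<tau>1 (fst x), \<tau>2 (snd x)) + r2 (\<tau>1 (fst x), \<tau>2 (snd x)) = 1"
    \<comment> \<open>(A2)-(A3): x \<mapsto> r_i(tau(x)) globally Lipschitz and C^1 on Omega\<close>
    and r_lip: "\<exists>L. L-lipschitz_on \<Omega> (\<lambda>x. r1 (\<tau>1 (fst x), \<tau>2 (snd x)))"
               "\<exists>L. L-lipschitz_on \<Omega> (\<lambda>x. r2 (\<tau>1 (fst x), \<tau>2 (snd x)))"
    and r1_C1: "\<forall>x\<in>\<Omega>. ((\<lambda>x. r1 (\<tau>1 (fst x), \<tau>2 (snd x))) has_derivative
                          (\<lambda>h. d11 x * fst h + d12 x * snd h)) (at x within \<Omega>)"
               "continuous_on \<Omega> d11" "continuous_on \<Omega> d12"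
    and r2_C1: "\<forall>x\<in>\<Omega>. ((\<lambda>x. r2 (\<tau>1 (fst x), \<tau>2 (snd x))) has_derivative
                          (\<lambda>h. d21 x * fst h + d22 x * snd h)) (at x within \<Omega>)"
               "continuous_on \<Omega> d21" "continuous_on \<Omega> d22"
    \<comment> \<open>(A4): dR_i/dtau_j > 0 for i \<noteq> j (on tau(Omega)), R_i = (1-alpha) r_i^0 + alpha r_i\<close>
    and A4_diff: "\<forall>p\<in>T. (r1 has_derivative r1' p) (at p within T)"
                 "\<forall>p\<in>T. (r2 has_derivative r2' p) (at p within T)"
    and A4: "\<forall>p\<in>T. \<alpha> * r1' p (0, 1) > 0" "\<forall>p\<in>T. \<alpha> * r2' p (1, 0) > 0"
    and A5: "F1 > (1 - \<alpha>) * \<phi> * r01" "F2 > (1 - \<alpha>) * \<phi> * r02"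
    and A6: "\<phi> < (F1 / C1) * B1" "\<phi> < (F2 / C2) * B2"
  shows "\<exists>xb\<in>\<Omega>. f xb = 0 \<and> (\<forall>y\<in>\<Omega>. f y = 0 \<longrightarrow> y = xb)
           \<and> (\<forall>\<epsilon>>0. \<exists>\<delta>>0. \<forall>x. is_solution f \<Omega> x \<and> dist (x 0) xb < \<delta>
                 \<longrightarrow> (\<forall>t\<ge>0. dist (x t) xb < \<epsilon>))
           \<and> (\<forall>x. is_solution f \<Omega> x \<longrightarrow> (x \<longlongrightarrow> xb) at_top)"
  proof -
  define R1 where "R1 = routing \<alpha> r01 r1 \<tau>1 \<tau>2"
  define R2 where "R2 = routing \<alpha> r02 r2 \<tau>1 \<tau>2"
  define v1 where "v1 = F1 / C1"
  define v2 where "v2 = F2 / C2"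
  define k1 where "k1 = F1 / (B1 - C1)"
  define k2 where "k2 = F2 / (B2 - C2)"
  have v1: "v1 > 0" "v1 * C1 = F1" using pos by (auto simp: v1_def)
  have v2: "v2 > 0" "v2 * C2 = F2" using pos by (auto simp: v2_def)
  have k1: "k1 > 0" "k1 * (B1 - C1) = F1" using pos CB by (auto simp: k1_def)
  have k2: "k2 > 0" "k2 * (B2 - C2) = F2" using pos CB by (auto simp: k2_def)
  have Om: "\<Omega> = {0..B1} \<times> {0..B2}" by (simp add: \<Omega>_def Omega_def)
  have inO: "\<And>p. p \<in> \<Omega> \<longleftrightarrow> 0 \<le> fst p \<and> fst p \<le> B1 \<and> 0 \<le> snd p \<and> snd p \<le> B2"
    by (auto simp: Om mem_Times_iff)
  have R1e: "\<And>p. R1 p = (1 - \<alpha>) * r01 + \<alpha> * r1 (\<tau>1 (fst p), \<tau>2 (snd p))"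
    by (simp add: R1_def routing_def)
  have R2e: "\<And>p. R2 p = (1 - \<alpha>) * r02 + \<alpha> * r2 (\<tau>1 (fst p), \<tau>2 (snd p))"
    by (simp add: R2_def routing_def)
  have fe: "\<And>p. f p = (min (\<phi> * R1 p) (min F1 (k1 * (B1 - fst p))) - min (v1 * fst p) F1,
                        min (\<phi> * R2 p) (min F2 (k2 * (B2 - snd p))) - min (v2 * snd p) F2)"
    using pos CB by (simp add: f_def two_route_field_def R1_def R2_def supply_min demand_min
        v1_def v2_def k1_def k2_def)
  have f1e: "\<And>p. fst (f p) = min (\<phi> * R1 p) (min F1 (k1 * (B1 - fst p))) - min (v1 * fst p) F1"
    by (simp add: fe)
  have f2e: "\<And>p. snd (f p) = min (\<phi> * R2 p) (min F2 (k2 * (B2 - snd p))) - min (v2 * snd p) F2"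
    by (simp add: fe)
  have Rr: "0 \<le> R1 p \<and> R1 p \<le> 1 \<and> 0 \<le> R2 p \<and> R2 p \<le> 1 \<and> R1 p + R2 p = 1" if pO: "p \<in> \<Omega>" for p
  proof -
    define a where "a = r1 (\<tau>1 (fst p), \<tau>2 (snd p))"
    define b where "b = r2 (\<tau>1 (fst p), \<tau>2 (snd p))"
    have ab: "0 \<le> a" "a \<le> 1" "0 \<le> b" "b \<le> 1" "a + b = 1"
      using r_range r_sum pO by (auto simp: a_def b_def)
    have al: "0 \<le> 1 - \<alpha>" "0 \<le> \<alpha>" using alpha by auto
    have e1: "R1 p = (1 - \<alpha>) * r01 + \<alpha> * a" by (simp add: R1e a_def)
    have e2: "R2 p = (1 - \<alpha>) * r02 + \<alpha> * b" by (simp add: R2e b_def)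
    have "R1 p + R2 p = (1 - \<alpha>) * (r01 + r02) + \<alpha> * (a + b)" by (simp add: e1 e2 algebra_simps)
    then have s: "R1 p + R2 p = 1" using ab r0 by simp
    have "0 \<le> R1 p" unfolding e1 using al ab r0 by (intro add_nonneg_nonneg mult_nonneg_nonneg) auto
    moreover have "0 \<le> R2 p" unfolding e2 using al ab r0 by (intro add_nonneg_nonneg mult_nonneg_nonneg) auto
    ultimately show ?thesis using s by auto
  qed
  obtain L1 where "L1-lipschitz_on \<Omega> (\<lambda>x. r1 (\<tau>1 (fst x), \<tau>2 (snd x)))" using r_lip(1) by auto
  then have cr1: "continuous_on \<Omega> (\<lambda>x. r1 (\<tau>1 (fst x), \<tau>2 (snd x)))" by (rule lipschitz_on_continuous_on)
  obtain L2 where "L2-lipschitz_on \<Omega> (\<lambda>x. r2 (\<tau>1 (fst x), \<tau>2 (snd x)))" using r_lip(2) by auto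
  then have cr2: "continuous_on \<Omega> (\<lambda>x. r2 (\<tau>1 (fst x), \<tau>2 (snd x)))" by (rule lipschitz_on_continuous_on)
  have R1f: "R1 = (\<lambda>p. (1 - \<alpha>) * r01 + \<alpha> * r1 (\<tau>1 (fst p), \<tau>2 (snd p)))" using R1e by (simp add: fun_eq_iff)
  have R2f: "R2 = (\<lambda>p. (1 - \<alpha>) * r02 + \<alpha> * r2 (\<tau>1 (fst p), \<tau>2 (snd p)))" using R2e by (simp add: fun_eq_iff)
  have cR1: "continuous_on \<Omega> R1" unfolding R1f by (intro continuous_intros cr1)
  have cR2: "continuous_on \<Omega> R2" unfolding R2f by (intro continuous_intros cr2)
  have ct1: "continuous_on {0..B1} \<tau>1" using tau1_C1(1) by (intro DERIV_continuous_on) auto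
  have ct2: "continuous_on {0..B2} \<tau>2" using tau2_C1(1) by (intro DERIV_continuous_on) auto
  have I1: "connected (\<tau>1 ` {0..B1})" using ct1 by (rule connected_continuous_image) simp
  have I2: "connected (\<tau>2 ` {0..B2})" using ct2 by (rule connected_continuous_image) simp
  have tmono1: "\<tau>1 y \<le> \<tau>1 y'" if "0 \<le> y" "y \<le> y'" "y' \<le> B1" for y y'
  proof (cases "y = y'")
    case False
    then have "y < y'" using that by simp
    then have "\<tau>1 y < \<tau>1 y'" using strict_mono_onD[OF tau_mono(1), of y y'] that by simp
    then show ?thesis by simp
  qed simp
  have tmono2: "\<tau>2 y \<le> \<tau>2 y'" if "0 \<le> y" "y \<le> y'" "y' \<le> B2" for y y'
  proof (cases "y = y'")
    case False
    then have "y < y'" using that by simp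
    then have "\<tau>2 y < \<tau>2 y'" using strict_mono_onD[OF tau_mono(2), of y y'] that by simp
    then show ?thesis by simp
  qed simp
  have M1: "r1 (\<tau>1 (fst p), \<tau>2 (snd p)) \<le> r1 (\<tau>1 (fst q), \<tau>2 (snd q))"
    if pq: "p \<in> \<Omega>" "q \<in> \<Omega>" "fst p = fst q" "snd p \<le> snd q" for p q
  proof -
    define a where "a = \<tau>1 (fst p)"
    have sub: "(\<lambda>s. (a, s)) ` (\<tau>2 ` {0..B2}) \<subseteq> T"
    proof
      fix z assume "z \<in> (\<lambda>s. (a, s)) ` (\<tau>2 ` {0..B2})"
      then obtain y where y: "y \<in> {0..B2}" "z = (a, \<tau>2 y)" by auto
      have "(fst p, y) \<in> Omega B1 B2" using pq y inO by (auto simp: Omega_def)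
      then show "z \<in> T" unfolding T_def using y by (auto simp: a_def image_iff intro!: bexI[of _ "(fst p, y)"])
    qed
    have "(\<lambda>s. r1 (a, s)) (\<tau>2 (snd p)) \<le> (\<lambda>s. r1 (a, s)) (\<tau>2 (snd q))"
    proof (rule mono_from_deriv[OF I2, of "\<lambda>s. r1 (a, s)"])
      fix s assume s: "s \<in> \<tau>2 ` {0..B2}"
      have "(a, s) \<in> T" using sub s by auto
      then have "\<alpha> * r1' (a, s) (0, 1) > 0" using A4(1) by auto
      then have "r1' (a, s) (0, 1) > 0" using alpha by (simp add: zero_less_mult_iff)
      then show "\<exists>D>0. ((\<lambda>s. r1 (a, s)) has_real_derivative D) (at s within \<tau>2 ` {0..B2})"
        using partial2[OF A4_diff(1) sub s] by blast
    next
      show "\<tau>2 (snd p) \<in> \<tau>2 ` {0..B2}" "\<tau>2 (snd q) \<in> \<tau>2 ` {0..B2}" using pq inO by auto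
      show "\<tau>2 (snd p) \<le> \<tau>2 (snd q)" using pq inO by (intro tmono2) auto
    qed
    then show ?thesis using pq by (simp add: a_def)
  qed
  have M2: "r2 (\<tau>1 (fst p), \<tau>2 (snd p)) \<le> r2 (\<tau>1 (fst q), \<tau>2 (snd q))"
    if pq: "p \<in> \<Omega>" "q \<in> \<Omega>" "snd p = snd q" "fst p \<le> fst q" for p q
  proof -
    define b where "b = \<tau>2 (snd p)"
    have sub: "(\<lambda>s. (s, b)) ` (\<tau>1 ` {0..B1}) \<subseteq> T"
    proof
      fix z assume "z \<in> (\<lambda>s. (s, b)) ` (\<tau>1 ` {0..B1})"
      then obtain y where y: "y \<in> {0..B1}" "z = (\<tau>1 y, b)" by auto
      have "(y, snd p) \<in> Omega B1 B2" using pq y inO by (auto simp: Omega_def)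
      then show "z \<in> T" unfolding T_def using y by (auto simp: b_def image_iff intro!: bexI[of _ "(y, snd p)"])
    qed
    have "(\<lambda>s. r2 (s, b)) (\<tau>1 (fst p)) \<le> (\<lambda>s. r2 (s, b)) (\<tau>1 (fst q))"
    proof (rule mono_from_deriv[OF I1, of "\<lambda>s. r2 (s, b)"])
      fix s assume s: "s \<in> \<tau>1 ` {0..B1}"
      have "(s, b) \<in> T" using sub s by auto
      then have "\<alpha> * r2' (s, b) (1, 0) > 0" using A4(2) by auto
      then have "r2' (s, b) (1, 0) > 0" using alpha by (simp add: zero_less_mult_iff)
      then show "\<exists>D>0. ((\<lambda>s. r2 (s, b)) has_real_derivative D) (at s within \<tau>1 ` {0..B1})"
        using partial1[OF A4_diff(2) sub s] by blast
    next
      show "\<tau>1 (fst p) \<in> \<tau>1 ` {0..B1}" "\<tau>1 (fst q) \<in> \<tau>1 ` {0..B1}" using pq inO by auto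
      show "\<tau>1 (fst p) \<le> \<tau>1 (fst q)" using pq inO by (intro tmono1) auto
    qed
    then show ?thesis using pq by (simp add: b_def)
  qed
  have R1up: "R1 p \<le> R1 q" if "p \<in> \<Omega>" "q \<in> \<Omega>" "fst p = fst q" "snd p \<le> snd q" for p q
    unfolding R1e using M1[OF that] alpha by (intro add_left_mono mult_left_mono) auto
  have R2up: "R2 p \<le> R2 q" if "p \<in> \<Omega>" "q \<in> \<Omega>" "snd p = snd q" "fst p \<le> fst q" for p q
    unfolding R2e using M2[OF that] alpha by (intro add_left_mono mult_left_mono) auto
  have R1dn: "R1 q \<le> R1 p" if "p \<in> \<Omega>" "q \<in> \<Omega>" "snd p = snd q" "fst p \<le> fst q" for p q
    using R2up[OF that] Rr[OF that(1)] Rr[OF that(2)] by linarith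
  have R2dn: "R2 q \<le> R2 p" if "p \<in> \<Omega>" "q \<in> \<Omega>" "fst p = fst q" "snd p \<le> snd q" for p q
    using R1up[OF that] Rr[OF that(1)] Rr[OF that(2)] by linarith
  define g1 where "g1 = (\<lambda>p. min (\<phi> * R1 p) F1)"
  define g2 where "g2 = (\<lambda>p. min (\<phi> * R2 p) F2)"
  have g1m: "g1 p \<le> g1 q" if "R1 p \<le> R1 q" for p q
    unfolding g1_def using that pos by (intro min.mono mult_left_mono) auto
  have g2m: "g2 p \<le> g2 q" if "R2 p \<le> R2 q" for p q
    unfolding g2_def using that pos by (intro min.mono mult_left_mono) auto
  have g1b: "g1 p \<le> \<phi> * R1 p" "g1 p \<le> F1" "g1 p < F1 \<Longrightarrow> g1 p = \<phi> * R1 p" for p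
    by (auto simp: g1_def min_def split: if_splits)
  have g2b: "g2 p \<le> \<phi> * R2 p" "g2 p \<le> F2" "g2 p < F2 \<Longrightarrow> g2 p = \<phi> * R2 p" for p
    by (auto simp: g2_def min_def split: if_splits)
  have F1form: "fst (f p) = g1 p - v1 * fst p" if "fst p \<le> C1" for p
  proof -
    have "k1 * (B1 - fst p) \<ge> k1 * (B1 - C1)" using that k1 by (intro mult_left_mono) auto
    then have a: "min F1 (k1 * (B1 - fst p)) = F1" using k1 by simp
    have "v1 * fst p \<le> v1 * C1" using that v1 by (intro mult_left_mono) auto
    then have b: "min (v1 * fst p) F1 = v1 * fst p" using v1 by simp
    show ?thesis using a b by (simp add: f1e g1_def)
  qed
  have F2form: "snd (f p) = g2 p - v2 * snd p" if "snd p \<le> C2" for p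
  proof -
    have "k2 * (B2 - snd p) \<ge> k2 * (B2 - C2)" using that k2 by (intro mult_left_mono) auto
    then have a: "min F2 (k2 * (B2 - snd p)) = F2" using k2 by simp
    have "v2 * snd p \<le> v2 * C2" using that v2 by (intro mult_left_mono) auto
    then have b: "min (v2 * snd p) F2 = v2 * snd p" using v2 by simp
    show ?thesis using a b by (simp add: f2e g2_def)
  qed
  have F1neg: "fst (f p) < 0" if "fst p > C1" for p
  proof -
    have "k1 * (B1 - fst p) < k1 * (B1 - C1)" using that k1 by (intro mult_strict_left_mono) auto
    then have a: "min F1 (k1 * (B1 - fst p)) < F1" using k1 by simp
    have "v1 * fst p \<ge> v1 * C1" using that v1 by (intro mult_left_mono) auto
    then have b: "min (v1 * fst p) F1 = F1" using v1 by simp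
    have "min (\<phi> * R1 p) (min F1 (k1 * (B1 - fst p))) < F1" using a by linarith
    then show ?thesis using b by (simp add: f1e)
  qed
  have F2neg: "snd (f p) < 0" if "snd p > C2" for p
  proof -
    have "k2 * (B2 - snd p) < k2 * (B2 - C2)" using that k2 by (intro mult_strict_left_mono) auto
    then have a: "min F2 (k2 * (B2 - snd p)) < F2" using k2 by simp
    have "v2 * snd p \<ge> v2 * C2" using that v2 by (intro mult_left_mono) auto
    then have b: "min (v2 * snd p) F2 = F2" using v2 by simp
    have "min (\<phi> * R2 p) (min F2 (k2 * (B2 - snd p))) < F2" using a by linarith
    then show ?thesis using b by (simp add: f2e)
  qed
  define G where "G = (\<lambda>p. (min (\<phi> * R1 p / v1) C1, min (\<phi> * R2 p / v2) C2))"
  have cG: "continuous_on \<Omega> G" unfolding G_def by (intro continuous_intros cR1 cR2) (use v1 v2 in auto)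
  have GO: "G \<in> \<Omega> \<rightarrow> \<Omega>"
  proof
    fix p assume pO: "p \<in> \<Omega>"
    have "0 \<le> \<phi> * R1 p / v1" "0 \<le> \<phi> * R2 p / v2" using Rr[OF pO] pos v1 v2 by auto
    then show "G p \<in> \<Omega>" using CB pos unfolding inO G_def by auto
  qed
  have "compact \<Omega>" unfolding Om by (intro compact_Times compact_Icc)
  moreover have "convex \<Omega>" unfolding Om by (intro convex_Times convex_real_interval)
  moreover have "\<Omega> \<noteq> {}" using pos unfolding Om by auto
  ultimately obtain xb where xbO: "xb \<in> \<Omega>" and Gx: "G xb = xb" using brouwer[OF _ _ _ cG GO] by blast
  define x1 where "x1 = fst xb"
  define x2 where "x2 = snd xb"
  have x1e: "x1 = min (\<phi> * R1 xb / v1) C1" using Gx by (metis G_def fst_conv x1_def)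
  have x2e: "x2 = min (\<phi> * R2 xb / v2) C2" using Gx by (metis G_def snd_conv x2_def)
  have x1C: "x1 \<le> C1" using x1e by simp
  have x2C: "x2 \<le> C2" using x2e by simp
  have gx1: "g1 xb = v1 * x1"
  proof (cases "\<phi> * R1 xb / v1 \<le> C1")
    case True
    then have "\<phi> * R1 xb \<le> F1" using v1 by (simp add: divide_le_eq mult.commute)
    then show ?thesis using True v1 x1e by (simp add: g1_def)
  next
    case False
    then have "\<phi> * R1 xb > F1" using v1 by (simp add: divide_le_eq mult.commute not_le less_divide_eq)
    then show ?thesis using False v1 x1e by (simp add: g1_def)
  qed
  have gx2: "g2 xb = v2 * x2"
  proof (cases "\<phi> * R2 xb / v2 \<le> C2")
    case True
    then have "\<phi> * R2 xb \<le> F2" using v2 by (simp add: divide_le_eq mult.commute)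
    then show ?thesis using True v2 x2e by (simp add: g2_def)
  next
    case False
    then have "\<phi> * R2 xb > F2" using v2 by (simp add: divide_le_eq mult.commute not_le less_divide_eq)
    then show ?thesis using False v2 x2e by (simp add: g2_def)
  qed
  have fxb: "f xb = 0"
  proof -
    have "fst (f xb) = 0" using F1form[of xb] x1C gx1 by (simp add: x1_def)
    moreover have "snd (f xb) = 0" using F2form[of xb] x2C gx2 by (simp add: x2_def)
    ultimately show ?thesis by (simp add: prod_eq_iff)
  qed
  have xb_eq: "xb = (x1, x2)" by (simp add: x1_def x2_def)
  have up: "fst p \<le> fst xb \<and> snd p \<le> snd xb"
    if pO: "p \<in> \<Omega>" and f1: "fst (f p) \<ge> 0" and f2: "snd (f p) \<ge> 0" for p
  proof -
    have pC1: "fst p \<le> C1" using F1neg[of p] f1 by linarith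
    have pC2: "snd p \<le> C2" using F2neg[of p] f2 by linarith
    have gp1: "v1 * fst p \<le> g1 p" using F1form[OF pC1] f1 by simp
    have gp2: "v2 * snd p \<le> g2 p" using F2form[OF pC2] f2 by simp
    have both: "\<not> (fst p > x1 \<and> snd p > x2)"
    proof
      assume a: "fst p > x1 \<and> snd p > x2"
      have "v1 * x1 < v1 * C1" using a pC1 v1 by (intro mult_strict_left_mono) auto
      then have e1: "g1 xb = \<phi> * R1 xb" using gx1 v1 g1b(3)[of xb] by simp
      have "v2 * x2 < v2 * C2" using a pC2 v2 by (intro mult_strict_left_mono) auto
      then have e2: "g2 xb = \<phi> * R2 xb" using gx2 v2 g2b(3)[of xb] by simp
      have l1: "v1 * x1 < v1 * fst p" using a v1 by (intro mult_strict_left_mono) auto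
      have l2: "v2 * x2 < v2 * snd p" using a v2 by (intro mult_strict_left_mono) auto
      have "\<phi> * R1 p + \<phi> * R2 p = \<phi>" using Rr[OF pO] by (simp add: distrib_left[symmetric])
      moreover have "\<phi> * R1 xb + \<phi> * R2 xb = \<phi>" using Rr[OF xbO] by (simp add: distrib_left[symmetric])
      ultimately show False using e1 e2 gx1 gx2 l1 l2 gp1 gp2 g1b(1)[of p] g2b(1)[of p] by linarith
    qed
    have c1: "fst p \<le> x1"
    proof (rule ccontr)
      assume "\<not> ?thesis"
      then have a: "fst p > x1" by simp
      then have b: "snd p \<le> x2" using both by auto
      define q where "q = (x1, snd p)"
      have qO: "q \<in> \<Omega>" using pO xbO inO by (auto simp: q_def x1_def)
      have "R1 p \<le> R1 q" using R1dn[OF qO pO] a by (simp add: q_def)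
      also have "R1 q \<le> R1 xb" using R1up[OF qO xbO] b by (simp add: q_def x1_def x2_def)
      finally have "g1 p \<le> g1 xb" by (rule g1m)
      moreover have "v1 * x1 < v1 * fst p" using a v1 by (intro mult_strict_left_mono) auto
      ultimately show False using gp1 gx1 by linarith
    qed
    have c2: "snd p \<le> x2"
    proof (rule ccontr)
      assume "\<not> ?thesis"
      then have a: "snd p > x2" by simp
      then have b: "fst p \<le> x1" using both by auto
      define q where "q = (x1, snd p)"
      have qO: "q \<in> \<Omega>" using pO xbO inO by (auto simp: q_def x1_def)
      have "R2 p \<le> R2 q" using R2up[OF pO qO] b by (simp add: q_def)
      also have "R2 q \<le> R2 xb" using R2dn[OF xbO qO] a by (simp add: q_def x1_def x2_def)
      finally have "g2 p \<le> g2 xb" by (rule g2m)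
      moreover have "v2 * x2 < v2 * snd p" using a v2 by (intro mult_strict_left_mono) auto
      ultimately show False using gp2 gx2 by linarith
    qed
    show ?thesis using c1 c2 by (simp add: x1_def x2_def)
  qed
  have low: "fst xb \<le> fst p \<and> snd xb \<le> snd p"
    if pO: "p \<in> \<Omega>" and f1: "fst (f p) \<le> 0" and f2: "snd (f p) \<le> 0" for p
  proof -
    have both: "\<not> (fst p < x1 \<and> snd p < x2)"
    proof
      assume a: "fst p < x1 \<and> snd p < x2"
      have gp1: "g1 p \<le> v1 * fst p" using F1form[of p] a x1C f1 by simp
      have gp2: "g2 p \<le> v2 * snd p" using F2form[of p] a x2C f2 by simp
      have l1: "v1 * fst p < v1 * x1" using a v1 by (intro mult_strict_left_mono) auto
      have l2: "v2 * snd p < v2 * x2" using a v2 by (intro mult_strict_left_mono) auto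
      have "v1 * x1 \<le> v1 * C1" using x1C v1 by (intro mult_left_mono) auto
      then have "g1 p < F1" using gp1 l1 v1 by linarith
      then have e1: "g1 p = \<phi> * R1 p" by (rule g1b(3))
      have "v2 * x2 \<le> v2 * C2" using x2C v2 by (intro mult_left_mono) auto
      then have "g2 p < F2" using gp2 l2 v2 by linarith
      then have e2: "g2 p = \<phi> * R2 p" by (rule g2b(3))
      have "\<phi> * R1 p + \<phi> * R2 p = \<phi>" using Rr[OF pO] by (simp add: distrib_left[symmetric])
      moreover have "\<phi> * R1 xb + \<phi> * R2 xb = \<phi>" using Rr[OF xbO] by (simp add: distrib_left[symmetric])
      ultimately show False using e1 e2 gx1 gx2 l1 l2 gp1 gp2 g1b(1)[of xb] g2b(1)[of xb] by linarith
    qed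
    have c1: "x1 \<le> fst p"
    proof (rule ccontr)
      assume "\<not> ?thesis"
      then have a: "fst p < x1" by simp
      then have b: "x2 \<le> snd p" using both by auto
      define q where "q = (x1, snd p)"
      have qO: "q \<in> \<Omega>" using pO xbO inO by (auto simp: q_def x1_def)
      have "R1 xb \<le> R1 q" using R1up[OF xbO qO] b by (simp add: q_def x1_def x2_def)
      also have "R1 q \<le> R1 p" using R1dn[OF pO qO] a by (simp add: q_def)
      finally have "g1 xb \<le> g1 p" by (rule g1m)
      moreover have "g1 p \<le> v1 * fst p" using F1form[of p] a x1C f1 by simp
      moreover have "v1 * fst p < v1 * x1" using a v1 by (intro mult_strict_left_mono) auto
      ultimately show False using gx1 by linarith
    qed
    have c2: "x2 \<le> snd p"
    proof (rule ccontr)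
      assume "\<not> ?thesis"
      then have a: "snd p < x2" by simp
      then have b: "x1 \<le> fst p" using both by auto
      define q where "q = (fst p, x2)"
      have qO: "q \<in> \<Omega>" using pO xbO inO by (auto simp: q_def x2_def)
      have "R2 xb \<le> R2 q" using R2up[OF xbO qO] b by (simp add: q_def x1_def x2_def)
      also have "R2 q \<le> R2 p" using R2dn[OF pO qO] a by (simp add: q_def)
      finally have "g2 xb \<le> g2 p" by (rule g2m)
      moreover have "g2 p \<le> v2 * snd p" using F2form[of p] a x2C f2 by simp
      moreover have "v2 * snd p < v2 * x2" using a v2 by (intro mult_strict_left_mono) auto
      ultimately show False using gx2 by linarith
    qed
    show ?thesis using c1 c2 by (simp add: x1_def x2_def)
  qed
  have strict2: "snd (f q) < snd (f p) \<or> snd (f q) < 0"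
    if pO: "p \<in> \<Omega>" and qO: "q \<in> \<Omega>" and e: "fst p = fst q" and lt: "snd p < snd q" for p q
  proof (cases "snd q > C2")
    case True then show ?thesis using F2neg by auto
  next
    case False
    then have "snd q \<le> C2" by simp
    moreover have "g2 q \<le> g2 p" using R2dn[OF pO qO e] lt by (intro g2m) auto
    moreover have "v2 * snd p < v2 * snd q" using lt v2 by (intro mult_strict_left_mono) auto
    ultimately show ?thesis using F2form[of p] F2form[of q] lt by auto
  qed
  have mono1: "fst (f p) \<le> fst (f q)"
    if pO: "p \<in> \<Omega>" and qO: "q \<in> \<Omega>" and e: "fst p = fst q" and le: "snd p \<le> snd q" for p q
  proof -
    have "\<phi> * R1 p \<le> \<phi> * R1 q" using R1up[OF that] pos by (intro mult_left_mono) auto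
    then show ?thesis unfolding f1e e by (intro diff_right_mono min.mono) auto
  qed
  have mono2: "snd (f p) \<le> snd (f q)"
    if pO: "p \<in> \<Omega>" and qO: "q \<in> \<Omega>" and e: "snd p = snd q" and le: "fst p \<le> fst q" for p q
  proof -
    have "\<phi> * R2 p \<le> \<phi> * R2 q" using R2up[OF that] pos by (intro mult_left_mono) auto
    then show ?thesis unfolding f2e e by (intro diff_right_mono min.mono) auto
  qed
  have ff: "f = (\<lambda>p. (min (\<phi> * R1 p) (min F1 (k1 * (B1 - fst p))) - min (v1 * fst p) F1,
                        min (\<phi> * R2 p) (min F2 (k2 * (B2 - snd p))) - min (v2 * snd p) F2))"
    using fe by (simp add: fun_eq_iff)
  have cf: "continuous_on \<Omega> f" unfolding ff by (intro continuous_intros cR1 cR2)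
  have xbB: "fst xb < B1" "snd xb < B2" using x1C x2C CB by (auto simp: x1_def x2_def)
  interpret G: gas f B1 B2 xb \<Omega>
    by (unfold_locales) (use Om pos xbO xbB fxb cf mono1 mono2 up low strict2 in auto)
  show ?thesis
  proof (intro bexI[of _ xb] conjI allI impI ballI)
    show "xb \<in> \<Omega>" by (rule xbO)
    show "f xb = 0" by (rule fxb)
    fix y assume "y \<in> \<Omega>" "f y = 0"
    then show "y = xb" using up[of y] low[of y] by (simp add: prod_eq_iff)
  next
    fix e :: real assume "e > 0"
    then show "\<exists>\<delta>>0. \<forall>x. is_solution f \<Omega> x \<and> dist (x 0) xb < \<delta> \<longrightarrow> (\<forall>t\<ge>0. dist (x t) xb < e)"
      by (rule G.stability)
  next
    fix x assume "is_solution f \<Omega> x"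
    then show "(x \<longlongrightarrow> xb) at_top" by (rule G.convergence)
  qed
qed


end
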